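(* Let $\mathbb{X}=\{\mathbf{x}_1,\dots,\mathbf{x}_N\}\subset\mathbb{R}^d$, let $P$ be a probability measure supported on the $N$ points of $\mathbb{X}$, let $Q$ be a probability measure on $\mathbb{R}^d$ with $\int|\mathbf{y}|^2dQ(\mathbf{y})<\infty$, and let $Q_m$ be the empirical measure of an i.i.d. sample $Y_1,\dots,Y_m$ from $Q$. Then $$E\left|\mathcal{W}_1(P,Q_m)-\mathcal{W}_1(P,Q)\right|\leq\frac{8\sqrt{2N}}{\sqrt{m}}K(\mathbb{X},Q),$$ where $K(\mathbb{X},Q)=\left(4\operatorname{diam}(\mathbb{X})+2\sqrt{\int|\mathbf{y}|^2dQ(\mathbf{y})}+2\operatorname{diam}(\mathbb{X})\right)\left(\log 2+\sqrt{2\operatorname{diam}(\mathbb{X})+1}\right)$.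
   Context: $|\cdot|$ is the Euclidean norm and $\mathcal{W}_1(\mu,\nu)=\inf_{\pi\in\Pi(\mu,\nu)}\int|\mathbf{x}-\mathbf{y}|\,d\pi(\mathbf{x},\mathbf{y})$ over couplings $\pi$ of $\mu,\nu$. $\operatorname{diam}(\mathbb{X})=\max_{i,j}|\mathbf{x}_i-\mathbf{x}_j|$. *)

theory Defs
  imports "HOL-Probability.Probability"
begin

definition couplings :: "'a::euclidean_space measure \<Rightarrow> 'a measure \<Rightarrow> ('a \<times> 'a) measure set" where
  "couplings \<mu> \<nu> = {\<pi>. sets \<pi> = sets (borel \<Otimes>\<^sub>M borel) \<and>
      distr \<pi> borel fst = \<mu> \<and> distr \<pi> borel snd = \<nu>}"

definition W1 :: "'a::euclidean_space measure \<Rightarrow> 'a measure \<Rightarrow> ennreal" where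
  "W1 \<mu> \<nu> = (INF \<pi>\<in>couplings \<mu> \<nu>. \<integral>\<^sup>+ p. ennreal (norm (fst p - snd p)) \<partial>\<pi>)"

text \<open>Empirical measure of the sample Y 0, ..., Y (m-1) at outcome \<omega>:
  (1/m) times the sum of the Dirac masses at the sample points (with multiplicities).\<close>
definition empirical_measure :: "nat \<Rightarrow> (nat \<Rightarrow> 'b \<Rightarrow> 'a::euclidean_space) \<Rightarrow> 'b \<Rightarrow> 'a measure" where
  "empirical_measure m Y \<omega> = distr (measure_pmf (pmf_of_set {..<m})) borel (\<lambda>i. Y i \<omega>)"

end

theory Submission
  imports Defs
begin

locale fin_setup =
  fixes X :: "'a::euclidean_space set" and P :: "'a measure"
  assumes finX: "finite X" and neX: "X \<noteq> {}" and probP: "prob_space P"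
    and setsP: "sets P = sets borel" and PX: "emeasure P X = 1"
begin

definition p :: "'a \<Rightarrow> real" where "p x = measure P {x}"

definition Poly :: "nat \<Rightarrow> (nat \<Rightarrow> 'a \<Rightarrow> real) set" where
  "Poly m = {w. (\<forall>i<m. \<forall>x\<in>X. 0 \<le> w i x) \<and> (\<forall>i<m. (\<Sum>x\<in>X. w i x) = 1)
     \<and> (\<forall>x\<in>X. (\<Sum>i<m. w i x) / m = p x)}"

definition cst :: "nat \<Rightarrow> (nat \<Rightarrow> 'a) \<Rightarrow> (nat \<Rightarrow> 'a \<Rightarrow> real) \<Rightarrow> real" where
  "cst m y w = (\<Sum>i<m. \<Sum>x\<in>X. w i x * norm (x - y i)) / m"

lemma p_nonneg: "0 \<le> p x" unfolding p_def by simp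

lemma emeasure_P_single: "emeasure P {x} = ennreal (p x)"
proof -
  interpret prob_space P by (rule probP)
  show ?thesis unfolding p_def by (simp add: emeasure_eq_measure)
qed

lemma P_compl: "emeasure P (B - X) = 0"
proof -
  interpret prob_space P by (rule probP)
  have "X \<in> sets P" using finX setsP by (simp add: finite_imp_closed)
  have "emeasure P (space P - X) = 0"
    using emeasure_compl[OF \<open>X \<in> sets P\<close>] PX emeasure_space_1 by simp
  moreover have "B - X \<subseteq> space P - X" using setsP sets_eq_imp_space_eq[OF setsP] by auto
  moreover have "space P - X \<in> sets P" using \<open>X \<in> sets P\<close> by auto
  ultimately show ?thesis by (metis emeasure_eq_0)
qed

lemma P_emeasure:
  assumes "B \<in> sets borel"
  shows "emeasure P B = (\<Sum>x\<in>X. indicator B x * ennreal (p x))"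
proof -
  interpret prob_space P by (rule probP)
  have BX: "B \<inter> X \<in> sets P" "B - X \<in> sets P" using assms finX setsP by (auto simp: finite_imp_closed)
  have "emeasure P B = emeasure P (B \<inter> X) + emeasure P (B - X)"
    using plus_emeasure[OF BX] by (metis Diff_Int_distrib2 Int_Diff_Un inf.idem inf_commute Int_Diff_disjoint)
  also have "\<dots> = emeasure P (B \<inter> X)" using P_compl by simp
  also have "\<dots> = (\<Sum>x\<in>B \<inter> X. emeasure P {x})"
    by (rule emeasure_eq_sum_singleton) (use finX setsP in auto)
  also have "\<dots> = (\<Sum>x\<in>X. indicator B x * ennreal (p x))"
  proof -
    have "(\<Sum>x\<in>B \<inter> X. emeasure P {x}) = (\<Sum>x\<in>X \<inter> B. ennreal (p x))"
      by (simp add: emeasure_P_single Int_commute)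
    also have "\<dots> = (\<Sum>x\<in>X. if x \<in> B then ennreal (p x) else 0)"
      by (rule sum.inter_restrict[OF finX])
    also have "\<dots> = (\<Sum>x\<in>X. indicator B x * ennreal (p x))"
      by (intro sum.cong) (auto simp: indicator_def)
    finally show ?thesis .
  qed
  finally show ?thesis .
qed

lemma sum_p: "(\<Sum>x\<in>X. p x) = 1"
proof -
  have "ennreal (\<Sum>x\<in>X. p x) = (\<Sum>x\<in>X. ennreal (p x))" using p_nonneg by simp
  also have "\<dots> = emeasure P X" using P_emeasure[of X] finX by (simp add: finite_imp_closed)
  finally show ?thesis using PX by simp
qed

end

context fin_setup begin

lemma coupling_construct:
  fixes R :: "'c measure" and Z :: "nat \<Rightarrow> 'c \<Rightarrow> 'a" and w :: "'c \<Rightarrow> nat \<Rightarrow> 'a \<Rightarrow> real"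
    and \<nu> :: "'a measure"
  assumes R: "prob_space R" and m: "m \<ge> 1"
   and Zm: "\<And>i. i<m \<Longrightarrow> Z i \<in> borel_measurable R"
   and wm: "\<And>i x. (\<lambda>\<omega>. w \<omega> i x) \<in> borel_measurable R"
   and wP: "\<And>\<omega>. \<omega>\<in>space R \<Longrightarrow> w \<omega> \<in> Poly m"
   and nu_sets: "sets \<nu> = sets borel"
   and nu: "\<And>B. B\<in>sets borel \<Longrightarrow> emeasure \<nu> B = (\<Sum>i<m. emeasure R (Z i -` B \<inter> space R)) / m"
  shows "W1 P \<nu> \<le> (\<integral>\<^sup>+\<omega>. ennreal (cst m (\<lambda>i. Z i \<omega>) (w \<omega>)) \<partial>R)"
proof -
  interpret R: prob_space R by (rule R)
  define I where "I = {..<m} \<times> X"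
  have finI: "finite I" using finX by (simp add: I_def)
  define C where "C = count_space I"
  define F :: "(nat \<times> 'a) \<times> 'c \<Rightarrow> ennreal" where
    "F = (\<lambda>(ix, \<omega>). ennreal (w \<omega> (fst ix) (snd ix) / m))"
  define T :: "(nat \<times> 'a) \<times> 'c \<Rightarrow> 'a \<times> 'a" where
    "T = (\<lambda>(ix, \<omega>). (snd ix, Z (fst ix) \<omega>))"
  define PP where "PP = distr (density (C \<Otimes>\<^sub>M R) F) (borel \<Otimes>\<^sub>M borel) T"
  interpret C: sigma_finite_measure C unfolding C_def
    by (rule sigma_finite_measure_count_space_finite[OF finI])
  interpret CR: pair_sigma_finite C R
    by (simp add: pair_sigma_finite_def C.sigma_finite_measure_axioms R.sigma_finite_measure_axioms)
  have Tm: "T \<in> measurable (C \<Otimes>\<^sub>M R) (borel \<Otimes>\<^sub>M borel)"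
    unfolding C_def
  proof (rule measurable_pair_measure_countable1)
    show "countable I" using finI by (rule countable_finite)
    fix ix assume "ix \<in> I"
    then have "fst ix < m" by (auto simp: I_def)
    then show "(\<lambda>\<omega>. T (ix, \<omega>)) \<in> measurable R (borel \<Otimes>\<^sub>M borel)"
      unfolding T_def using Zm by (auto intro!: measurable_Pair)
  qed
  have Fm: "F \<in> borel_measurable (C \<Otimes>\<^sub>M R)"
    unfolding C_def
  proof (rule measurable_pair_measure_countable1)
    show "countable I" using finI by (rule countable_finite)
    fix ix assume "ix \<in> I"
    show "(\<lambda>\<omega>. F (ix, \<omega>)) \<in> borel_measurable R"
      unfolding F_def using wm by auto
  qed
  have integral_formula: "(\<integral>\<^sup>+z. ennreal (h z) \<partial>PP) =
      (\<integral>\<^sup>+\<omega>. ennreal (\<Sum>i<m. \<Sum>x\<in>X. w \<omega> i x / m * h (x, Z i \<omega>)) \<partial>R)"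
    if hm: "h \<in> borel_measurable (borel \<Otimes>\<^sub>M borel)" and hnn: "\<And>z. h z \<ge> 0" for h :: "'a \<times> 'a \<Rightarrow> real"
  proof -
    have "(\<integral>\<^sup>+z. ennreal (h z) \<partial>PP) = (\<integral>\<^sup>+z. ennreal (h (T z)) \<partial>density (C \<Otimes>\<^sub>M R) F)"
      unfolding PP_def using hm Tm by (subst nn_integral_distr) auto
    also have "\<dots> = (\<integral>\<^sup>+z. F z * ennreal (h (T z)) \<partial>(C \<Otimes>\<^sub>M R))"
      using hm Tm Fm by (subst nn_integral_density) auto
    also have "\<dots> = (\<integral>\<^sup>+\<omega>. (\<integral>\<^sup>+ix. F (ix, \<omega>) * ennreal (h (T (ix, \<omega>))) \<partial>C) \<partial>R)"
      using hm Tm Fm by (subst CR.nn_integral_snd[symmetric]) auto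
    also have "\<dots> = (\<integral>\<^sup>+\<omega>. (\<Sum>ix\<in>I. F (ix, \<omega>) * ennreal (h (T (ix, \<omega>)))) \<partial>R)"
      unfolding C_def using finI by (simp add: nn_integral_count_space_finite)
    also have "\<dots> = (\<integral>\<^sup>+\<omega>. ennreal (\<Sum>i<m. \<Sum>x\<in>X. w \<omega> i x / m * h (x, Z i \<omega>)) \<partial>R)"
    proof (rule nn_integral_cong)
      fix \<omega> assume "\<omega> \<in> space R"
      then have wp: "w \<omega> \<in> Poly m" by (rule wP)
      have nn: "ix \<in> I \<Longrightarrow> 0 \<le> w \<omega> (fst ix) (snd ix) / m * h (T (ix, \<omega>))" for ix
        using wp hnn[of "T (ix, \<omega>)"] by (auto simp: Poly_def I_def intro!: mult_nonneg_nonneg divide_nonneg_nonneg)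
      have "(\<Sum>ix\<in>I. F (ix, \<omega>) * ennreal (h (T (ix, \<omega>))))
          = (\<Sum>ix\<in>I. ennreal (w \<omega> (fst ix) (snd ix) / m * h (T (ix, \<omega>))))"
      proof (intro sum.cong refl)
        fix ix assume "ix \<in> I"
        then have "0 \<le> w \<omega> (fst ix) (snd ix) / m" using wp by (auto simp: Poly_def I_def)
        then show "F (ix, \<omega>) * ennreal (h (T (ix, \<omega>))) = ennreal (w \<omega> (fst ix) (snd ix) / m * h (T (ix, \<omega>)))"
          by (subst ennreal_mult[OF _ hnn]) (auto simp: F_def)
      qed
      also have "\<dots> = ennreal (\<Sum>ix\<in>I. w \<omega> (fst ix) (snd ix) / m * h (T (ix, \<omega>)))"
        using nn by (simp add: sum_ennreal)
      also have "(\<Sum>ix\<in>I. w \<omega> (fst ix) (snd ix) / m * h (T (ix, \<omega>)))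
          = (\<Sum>i<m. \<Sum>x\<in>X. w \<omega> i x / m * h (x, Z i \<omega>))"
        unfolding I_def T_def sum.cartesian_product by (intro sum.cong) auto
      finally show "(\<Sum>ix\<in>I. F (ix, \<omega>) * ennreal (h (T (ix, \<omega>))))
          = ennreal (\<Sum>i<m. \<Sum>x\<in>X. w \<omega> i x / m * h (x, Z i \<omega>))" .
    qed
    finally show ?thesis .
  qed
  have sets_Pi: "sets PP = sets (borel \<Otimes>\<^sub>M borel)" unfolding PP_def by simp
  have fst_m: "fst \<in> measurable PP borel"
    by (subst measurable_cong_sets[OF sets_Pi refl]) (rule measurable_fst)
  have snd_m: "snd \<in> measurable PP borel"
    by (subst measurable_cong_sets[OF sets_Pi refl]) (rule measurable_snd)
  have fstP: "distr PP borel fst = P"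
  proof (rule measure_eqI)
    show "sets (distr PP borel fst) = sets P" using setsP by simp
    fix A assume "A \<in> sets (distr PP borel fst)"
    then have A: "A \<in> sets borel" by simp
    have "emeasure (distr PP borel fst) A = (\<integral>\<^sup>+z. indicator A z \<partial>distr PP borel fst)"
      using A by (simp add: nn_integral_indicator)
    also have "\<dots> = (\<integral>\<^sup>+z. ennreal (indicator A (fst z)) \<partial>PP)"
      using A by (subst nn_integral_distr[OF fst_m]) (auto simp: ennreal_indicator)
    also have "\<dots> = (\<integral>\<^sup>+\<omega>. ennreal (\<Sum>i<m. \<Sum>x\<in>X. w \<omega> i x / m * indicator A x) \<partial>R)"
      using A by (subst integral_formula) auto
    also have "\<dots> = (\<integral>\<^sup>+\<omega>. ennreal (\<Sum>x\<in>X. indicator A x * p x) \<partial>R)"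
    proof (rule nn_integral_cong)
      fix \<omega> assume "\<omega> \<in> space R"
      then have wp: "w \<omega> \<in> Poly m" by (rule wP)
      have "(\<Sum>i<m. \<Sum>x\<in>X. w \<omega> i x / m * indicator A x) = (\<Sum>x\<in>X. indicator A x * ((\<Sum>i<m. w \<omega> i x) / m))"
        by (subst sum.swap) (simp add: sum_distrib_left sum_divide_distrib mult.commute)
      also have "\<dots> = (\<Sum>x\<in>X. indicator A x * p x)"
        using wp by (intro sum.cong) (auto simp: Poly_def)
      finally show "ennreal (\<Sum>i<m. \<Sum>x\<in>X. w \<omega> i x / m * indicator A x) = ennreal (\<Sum>x\<in>X. indicator A x * p x)"
        by simp
    qed
    also have "\<dots> = ennreal (\<Sum>x\<in>X. indicator A x * p x)"
      by (simp add: R.emeasure_space_1)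
    also have "\<dots> = emeasure P A"
    proof -
      have "emeasure P A = (\<Sum>x\<in>X. ennreal (indicator A x * p x))"
        unfolding P_emeasure[OF A]
        by (intro sum.cong refl) (simp add: ennreal_mult p_nonneg ennreal_indicator)
      also have "\<dots> = ennreal (\<Sum>x\<in>X. indicator A x * p x)"
        by (rule sum_ennreal) (simp add: p_nonneg)
      finally show ?thesis by simp
    qed
    finally show "emeasure (distr PP borel fst) A = emeasure P A" .
  qed
  have sndQ: "distr PP borel snd = \<nu>"
  proof (rule measure_eqI)
    show "sets (distr PP borel snd) = sets \<nu>" using nu_sets by simp
    fix B assume "B \<in> sets (distr PP borel snd)"
    then have B: "B \<in> sets borel" by simp
    have "emeasure (distr PP borel snd) B = (\<integral>\<^sup>+z. indicator B z \<partial>distr PP borel snd)"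
      using B by (simp add: nn_integral_indicator)
    also have "\<dots> = (\<integral>\<^sup>+z. ennreal (indicator B (snd z)) \<partial>PP)"
      using B by (subst nn_integral_distr[OF snd_m]) (auto simp: ennreal_indicator)
    also have "\<dots> = (\<integral>\<^sup>+\<omega>. ennreal (\<Sum>i<m. \<Sum>x\<in>X. w \<omega> i x / m * indicator B (Z i \<omega>)) \<partial>R)"
      using B by (subst integral_formula) auto
    also have "\<dots> = (\<integral>\<^sup>+\<omega>. (\<Sum>i<m. (indicator (Z i -` B \<inter> space R) \<omega> :: ennreal)) / of_nat m \<partial>R)"
    proof (rule nn_integral_cong)
      fix \<omega> assume om: "\<omega> \<in> space R"
      then have wp: "w \<omega> \<in> Poly m" by (rule wP)
      have "(\<Sum>i<m. \<Sum>x\<in>X. w \<omega> i x / m * indicator B (Z i \<omega>)) = (\<Sum>i<m. indicator B (Z i \<omega>) * (\<Sum>x\<in>X. w \<omega> i x)) / m"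
      proof -
        have *: "(\<Sum>x\<in>X. w \<omega> i x / m * c) = c * (\<Sum>x\<in>X. w \<omega> i x) / m" for i and c :: real
          by (simp only: sum_distrib_right[symmetric] sum_divide_distrib[symmetric]) simp
        show ?thesis unfolding * by (simp only: sum_divide_distrib)
      qed
      also have "\<dots> = (\<Sum>i<m. indicator B (Z i \<omega>)) / m"
        using wp by (simp add: Poly_def)
      finally have "ennreal (\<Sum>i<m. \<Sum>x\<in>X. w \<omega> i x / m * indicator B (Z i \<omega>)) = ennreal ((\<Sum>i<m. indicator B (Z i \<omega>)) / m)"
        by simp
      also have "\<dots> = ennreal (\<Sum>i<m. indicator B (Z i \<omega>)) / ennreal m"
        using m by (subst divide_ennreal) (auto intro!: sum_nonneg)
      also have "\<dots> = (\<Sum>i<m. (indicator (Z i -` B \<inter> space R) \<omega> :: ennreal)) / of_nat m"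
      proof -
        have "(\<Sum>i<m. indicator (Z i -` B \<inter> space R) \<omega>) = (\<Sum>i<m. ennreal (indicator B (Z i \<omega>)))"
          using om by (intro sum.cong refl) (simp add: indicator_def)
        also have "\<dots> = ennreal (\<Sum>i<m. indicator B (Z i \<omega>))"
          by (rule sum_ennreal) simp
        finally show ?thesis by (simp add: ennreal_of_nat_eq_real_of_nat)
      qed
      finally show "ennreal (\<Sum>i<m. \<Sum>x\<in>X. w \<omega> i x / m * indicator B (Z i \<omega>)) = (\<Sum>i<m. (indicator (Z i -` B \<inter> space R) \<omega> :: ennreal)) / of_nat m" .
    qed
    also have "\<dots> = (\<integral>\<^sup>+\<omega>. (\<Sum>i<m. indicator (Z i -` B \<inter> space R) \<omega>) \<partial>R) / of_nat m"
      using B Zm by (subst nn_integral_divide) auto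
    also have "\<dots> = (\<Sum>i<m. emeasure R (Z i -` B \<inter> space R)) / m"
      using B Zm by (subst nn_integral_sum) (auto simp: measurable_sets)
    also have "\<dots> = emeasure \<nu> B" using nu[OF B] by simp
    finally show "emeasure (distr PP borel snd) B = emeasure \<nu> B" .
  qed
  have "PP \<in> couplings P \<nu>"
    unfolding couplings_def using sets_Pi fstP sndQ by auto
  then have "W1 P \<nu> \<le> (\<integral>\<^sup>+z. ennreal (norm (fst z - snd z)) \<partial>PP)"
    unfolding W1_def by (rule INF_lower)
  also have "\<dots> = (\<integral>\<^sup>+\<omega>. ennreal (\<Sum>i<m. \<Sum>x\<in>X. w \<omega> i x / m * norm (x - Z i \<omega>)) \<partial>R)"
    by (subst integral_formula) auto
  also have "\<dots> = (\<integral>\<^sup>+\<omega>. ennreal (cst m (\<lambda>i. Z i \<omega>) (w \<omega>)) \<partial>R)"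
    unfolding cst_def by (simp add: sum_divide_distrib)
  finally show ?thesis .
qed

end

context fin_setup begin

lemma coupling_facts:
  assumes pi: "\<pi> \<in> couplings P \<nu>"
  shows "sets \<pi> = sets (borel \<Otimes>\<^sub>M borel)" "space \<pi> = UNIV"
    and "\<And>A. A \<in> sets borel \<Longrightarrow> emeasure \<pi> (A \<times> UNIV) = emeasure P A"
    and "\<And>B. B \<in> sets borel \<Longrightarrow> emeasure \<pi> (UNIV \<times> B) = emeasure \<nu> B"
proof -
  show s: "sets \<pi> = sets (borel \<Otimes>\<^sub>M borel)" using pi by (simp add: couplings_def)
  show sp: "space \<pi> = UNIV" using sets_eq_imp_space_eq[OF s] by (simp add: space_pair_measure)
  have fm: "fst \<in> measurable \<pi> borel"
    by (subst measurable_cong_sets[OF s refl]) (rule measurable_fst)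
  have sm: "snd \<in> measurable \<pi> borel"
    by (subst measurable_cong_sets[OF s refl]) (rule measurable_snd)
  fix A :: "'a set" assume A: "A \<in> sets borel"
  have "emeasure P A = emeasure (distr \<pi> borel fst) A" using pi by (simp add: couplings_def)
  also have "\<dots> = emeasure \<pi> (fst -` A \<inter> space \<pi>)" using A fm by (simp add: emeasure_distr)
  also have "fst -` A \<inter> space \<pi> = A \<times> UNIV" using sp by auto
  finally show "emeasure \<pi> (A \<times> UNIV) = emeasure P A" by simp
next
  have s: "sets \<pi> = sets (borel \<Otimes>\<^sub>M borel)" using pi by (simp add: couplings_def)
  have sp: "space \<pi> = UNIV" using sets_eq_imp_space_eq[OF s] by (simp add: space_pair_measure)
  have sm: "snd \<in> measurable \<pi> borel"
    by (subst measurable_cong_sets[OF s refl]) (rule measurable_snd)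
  fix B :: "'a set" assume B: "B \<in> sets borel"
  have "emeasure \<nu> B = emeasure (distr \<pi> borel snd) B" using pi by (simp add: couplings_def)
  also have "\<dots> = emeasure \<pi> (snd -` B \<inter> space \<pi>)" using B sm by (simp add: emeasure_distr)
  also have "snd -` B \<inter> space \<pi> = UNIV \<times> B" using sp by auto
  finally show "emeasure \<pi> (UNIV \<times> B) = emeasure \<nu> B" by simp
qed

lemma disintegrate:
  assumes nu: "prob_space \<nu>" "sets \<nu> = sets borel" and pi: "\<pi> \<in> couplings P \<nu>"
  obtains k :: "'a \<Rightarrow> 'a \<Rightarrow> real" where
   "\<And>x. (\<lambda>y. k y x) \<in> borel_measurable borel"
   "\<And>y x. 0 \<le> k y x" "\<And>y. (\<Sum>x\<in>X. k y x) = 1"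
   "\<And>x. x\<in>X \<Longrightarrow> (\<integral>\<^sup>+y. ennreal (k y x) \<partial>\<nu>) = ennreal (p x)"
   "(\<integral>\<^sup>+y. ennreal (\<Sum>x\<in>X. k y x * norm (x - y)) \<partial>\<nu>) \<le> (\<integral>\<^sup>+z. ennreal (norm (fst z - snd z)) \<partial>\<pi>)"
proof -
  interpret nu: prob_space \<nu> by (rule nu(1))
  note cf = coupling_facts[OF pi]
  have mnu: "f \<in> borel_measurable \<nu> \<longleftrightarrow> f \<in> borel_measurable borel" for f :: "'a \<Rightarrow> ennreal"
    by (simp only: measurable_cong_sets[OF nu(2) refl])
  have mpi: "f \<in> borel_measurable \<pi> \<longleftrightarrow> f \<in> borel_measurable (borel \<Otimes>\<^sub>M borel)" for f :: "'a \<times> 'a \<Rightarrow> ennreal"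
    by (simp only: measurable_cong_sets[OF cf(1) refl])
  have sp: "space \<pi> = UNIV" by (rule cf(2))
  have sm: "snd \<in> measurable \<pi> borel"
    by (subst measurable_cong_sets[OF cf(1) refl]) (rule measurable_snd)
  have meas_rect: "A \<times> B \<in> sets \<pi>" if "A \<in> sets borel" "B \<in> sets borel" for A B
    using that cf(1) by simp
  define nux where "nux x = distr (density \<pi> (indicator ({x} \<times> UNIV))) borel snd" for x
  have indm: "indicator ({x} \<times> UNIV) \<in> borel_measurable \<pi>" for x :: 'a
    using meas_rect[of "{x}" UNIV] by simp
  have sm': "snd \<in> measurable (density \<pi> (indicator ({x} \<times> UNIV))) borel" for x :: 'a
    by (subst measurable_cong_sets[OF sets_density refl]) (rule sm)
  have nux_int: "(\<integral>\<^sup>+y. g y \<partial>nux x) = (\<integral>\<^sup>+z. indicator ({x} \<times> UNIV) z * g (snd z) \<partial>\<pi>)"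
    if "g \<in> borel_measurable borel" for g x
    unfolding nux_def using that
    by (simp add: nn_integral_distr[OF sm'] nn_integral_density[OF indm measurable_compose[OF sm that]])
  have nux_em: "emeasure (nux x) B = emeasure \<pi> ({x} \<times> B)" if B: "B \<in> sets borel" for x B
  proof -
    have "emeasure (nux x) B = (\<integral>\<^sup>+y. indicator B y \<partial>nux x)"
      using B by (simp add: nux_def)
    also have "\<dots> = (\<integral>\<^sup>+z. indicator ({x} \<times> UNIV) z * indicator B (snd z) \<partial>\<pi>)"
      using B by (simp add: nux_int)
    also have "\<dots> = (\<integral>\<^sup>+z. indicator ({x} \<times> B) z \<partial>\<pi>)"
      by (intro nn_integral_cong) (auto simp: indicator_def)
    also have "\<dots> = emeasure \<pi> ({x} \<times> B)"
      using meas_rect[of "{x}" B] B by simp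
    finally show ?thesis .
  qed
  have sets_nux: "sets (nux x) = sets \<nu>" for x using nu(2) by (simp add: nux_def)
  have ac: "absolutely_continuous \<nu> (nux x)" for x
    unfolding absolutely_continuous_def
  proof
    fix B assume "B \<in> null_sets \<nu>"
    then have B: "B \<in> sets borel" "emeasure \<nu> B = 0" using nu(2) by auto
    have "emeasure \<pi> ({x} \<times> B) \<le> emeasure \<pi> (UNIV \<times> B)"
      by (rule emeasure_mono) (use meas_rect B in auto)
    then have "emeasure (nux x) B = 0" using nux_em[OF B(1)] cf(4)[OF B(1)] B(2) by simp
    then show "B \<in> null_sets (nux x)" using B sets_nux[of x] nu(2) by (auto simp: null_sets_def)
  qed
  define h where "h x = RN_deriv \<nu> (nux x)" for x
  have hm: "h x \<in> borel_measurable borel" for x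
    unfolding h_def by (subst measurable_cong_sets[OF nu(2)[symmetric] refl]) (rule borel_measurable_RN_deriv)
  have h_int: "(\<integral>\<^sup>+y. g y \<partial>nux x) = (\<integral>\<^sup>+y. h x y * g y \<partial>\<nu>)"
    if "g \<in> borel_measurable borel" for g x
    unfolding h_def using that nu(2)
    by (intro nu.RN_deriv_nn_integral ac sets_nux) (simp add: mnu)
  have AE1: "AE y in \<nu>. (\<Sum>x\<in>X. h x y) = 1"
  proof (rule nu.density_unique2)
    show "(\<lambda>y. \<Sum>x\<in>X. h x y) \<in> borel_measurable \<nu>" using hm by (simp add: mnu)
    show "(\<lambda>y. 1) \<in> borel_measurable \<nu>" by simp
    fix A assume "A \<in> sets \<nu>"
    then have A: "A \<in> sets borel" using nu(2) by simp
    have "(\<integral>\<^sup>+y. (\<Sum>x\<in>X. h x y) * indicator A y \<partial>\<nu>) = (\<Sum>x\<in>X. \<integral>\<^sup>+y. h x y * indicator A y \<partial>\<nu>)"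
      using hm A by (subst nn_integral_sum[symmetric]) (auto simp: sum_distrib_right mnu)
    also have "\<dots> = (\<Sum>x\<in>X. emeasure \<pi> ({x} \<times> A))"
    proof (intro sum.cong refl)
      fix x assume "x \<in> X"
      have "(\<integral>\<^sup>+y. h x y * indicator A y \<partial>\<nu>) = (\<integral>\<^sup>+y. indicator A y \<partial>nux x)"
        using A by (simp add: h_int)
      also have "\<dots> = emeasure (nux x) A"
        using A sets_nux[of x] nu(2) by (simp add: nn_integral_indicator)
      finally show "(\<integral>\<^sup>+y. h x y * indicator A y \<partial>\<nu>) = emeasure \<pi> ({x} \<times> A)"
        using nux_em[OF A] by simp
    qed
    also have "\<dots> = emeasure \<pi> (\<Union>x\<in>X. {x} \<times> A)"
      using A finX by (intro sum_emeasure) (auto simp: disjoint_family_on_def meas_rect)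
    also have "(\<Union>x\<in>X. {x} \<times> A) = X \<times> A" by auto
    also have "emeasure \<pi> (X \<times> A) = emeasure \<pi> (UNIV \<times> A)"
    proof -
      have XA: "X \<times> A \<in> sets \<pi>" "(UNIV - X) \<times> A \<in> sets \<pi>"
        using A finX by (auto intro!: meas_rect simp: finite_imp_closed)
      have "emeasure \<pi> ((UNIV - X) \<times> A) \<le> emeasure \<pi> ((UNIV - X) \<times> UNIV)"
        by (rule emeasure_mono) (use finX in \<open>auto intro!: meas_rect simp: finite_imp_closed\<close>)
      also have "\<dots> = emeasure P (UNIV - X)" using finX by (intro cf(3)) (auto simp: finite_imp_closed)
      also have "\<dots> = 0" by (rule P_compl)
      finally have z: "emeasure \<pi> ((UNIV - X) \<times> A) = 0" by simp
      have "UNIV \<times> A = X \<times> A \<union> (UNIV - X) \<times> A" by auto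
      then have "emeasure \<pi> (UNIV \<times> A) = emeasure \<pi> (X \<times> A) + emeasure \<pi> ((UNIV - X) \<times> A)"
        using XA by (simp add: plus_emeasure) (metis Diff_disjoint Times_Int_distrib1 Times_empty inf_top_right plus_emeasure)
      then show ?thesis using z by simp
    qed
    also have "\<dots> = emeasure \<nu> A" using cf(4)[OF A] .
    also have "\<dots> = (\<integral>\<^sup>+y. 1 * indicator A y \<partial>\<nu>)" using \<open>A \<in> sets \<nu>\<close> by simp
    finally show "(\<integral>\<^sup>+y \<in> A. (\<Sum>x\<in>X. h x y) \<partial>\<nu>) = (\<integral>\<^sup>+y \<in> A. 1 \<partial>\<nu>)" .
  qed
  define k where "k y x = (if (\<Sum>x'\<in>X. h x' y) = 1 then enn2real (h x y) else p x)" for y x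
  have "(\<lambda>y. k y x) \<in> borel_measurable borel" for x
    unfolding k_def using hm by measurable
  moreover have "0 \<le> k y x" for y x unfolding k_def by (simp add: p_nonneg)
  moreover have ksum: "(\<Sum>x\<in>X. k y x) = 1" for y
  proof (cases "(\<Sum>x'\<in>X. h x' y) = 1")
    case True
    have fin: "h x y \<noteq> \<top>" if "x \<in> X" for x
    proof -
      have "h x y \<le> (\<Sum>x'\<in>X. h x' y)" using finX that by (intro member_le_sum) auto
      then show ?thesis using True by (auto simp: top_unique)
    qed
    have "(\<Sum>x\<in>X. k y x) = (\<Sum>x\<in>X. enn2real (h x y))" using True by (simp add: k_def)
    also have "\<dots> = enn2real (\<Sum>x\<in>X. h x y)" using fin by (subst enn2real_sum) (auto simp: top.not_eq_extremum)
    finally show ?thesis using True by simp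
  next
    case False then show ?thesis by (simp add: k_def sum_p)
  qed
  moreover have AEk: "AE y in \<nu>. ennreal (k y x) = h x y" if "x \<in> X" for x
    using AE1
  proof eventually_elim
    case (elim y)
    have "h x y \<le> (\<Sum>x'\<in>X. h x' y)" using finX that by (intro member_le_sum) auto
    then have "h x y \<noteq> \<top>" using elim by (auto simp: top_unique)
    then show ?case using elim by (simp add: k_def ennreal_enn2real_if)
  qed
  moreover have "(\<integral>\<^sup>+y. ennreal (k y x) \<partial>\<nu>) = ennreal (p x)" if x: "x \<in> X" for x
  proof -
    have "(\<integral>\<^sup>+y. ennreal (k y x) \<partial>\<nu>) = (\<integral>\<^sup>+y. h x y * 1 \<partial>\<nu>)"
      using AEk[OF x] by (intro nn_integral_cong_AE) auto
    also have "\<dots> = (\<integral>\<^sup>+y. indicator UNIV y \<partial>nux x)" using h_int[of "\<lambda>_. indicator UNIV _" x] by simp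
    also have "\<dots> = emeasure (nux x) UNIV" using sets_nux[of x] nu(2) by (subst nn_integral_indicator) auto
    also have "\<dots> = emeasure \<pi> ({x} \<times> UNIV)" using nux_em[of UNIV x] by simp
    also have "\<dots> = emeasure P {x}" by (rule cf(3)) simp
    finally show ?thesis by (simp add: emeasure_P_single)
  qed
  moreover have "(\<integral>\<^sup>+y. ennreal (\<Sum>x\<in>X. k y x * norm (x - y)) \<partial>\<nu>) \<le> (\<integral>\<^sup>+z. ennreal (norm (fst z - snd z)) \<partial>\<pi>)"
  proof -
    have "(\<integral>\<^sup>+y. ennreal (\<Sum>x\<in>X. k y x * norm (x - y)) \<partial>\<nu>) = (\<integral>\<^sup>+y. (\<Sum>x\<in>X. h x y * ennreal (norm (x - y))) \<partial>\<nu>)"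
    proof (rule nn_integral_cong_AE)
      have "AE y in \<nu>. \<forall>x\<in>X. ennreal (k y x) = h x y"
        using AEk finX by (simp add: AE_finite_all)
      then show "AE y in \<nu>. ennreal (\<Sum>x\<in>X. k y x * norm (x - y)) = (\<Sum>x\<in>X. h x y * ennreal (norm (x - y)))"
      proof eventually_elim
        case (elim y)
        have "ennreal (\<Sum>x\<in>X. k y x * norm (x - y)) = (\<Sum>x\<in>X. ennreal (k y x * norm (x - y)))"
          using \<open>\<And>y x. 0 \<le> k y x\<close> by (subst sum_ennreal) auto
        also have "\<dots> = (\<Sum>x\<in>X. h x y * ennreal (norm (x - y)))"
          using elim \<open>\<And>y x. 0 \<le> k y x\<close> by (intro sum.cong refl) (simp add: ennreal_mult)
        finally show ?case .
      qed
    qed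
    also have "\<dots> = (\<Sum>x\<in>X. \<integral>\<^sup>+y. h x y * ennreal (norm (x - y)) \<partial>\<nu>)"
      using hm by (subst nn_integral_sum) (auto simp: mnu)
    also have "\<dots> = (\<Sum>x\<in>X. \<integral>\<^sup>+z. indicator ({x} \<times> UNIV) z * ennreal (norm (x - snd z)) \<partial>\<pi>)"
      by (intro sum.cong refl) (simp add: h_int[symmetric] nux_int)
    also have "\<dots> = (\<Sum>x\<in>X. \<integral>\<^sup>+z. indicator ({x} \<times> UNIV) z * ennreal (norm (fst z - snd z)) \<partial>\<pi>)"
      by (intro sum.cong refl nn_integral_cong) (auto simp: indicator_def)
    also have "\<dots> = (\<integral>\<^sup>+z. (\<Sum>x\<in>X. indicator ({x} \<times> UNIV) z * ennreal (norm (fst z - snd z))) \<partial>\<pi>)"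
      using indm by (subst nn_integral_sum) (auto simp: mpi)
    also have "\<dots> \<le> (\<integral>\<^sup>+z. ennreal (norm (fst z - snd z)) \<partial>\<pi>)"
    proof (rule nn_integral_mono)
      fix z :: "'a \<times> 'a"
      have "(\<Sum>x\<in>X. indicator ({x} \<times> UNIV) z * ennreal (norm (fst z - snd z)))
          = (\<Sum>x\<in>X. if x = fst z then ennreal (norm (fst z - snd z)) else 0)"
        by (intro sum.cong refl) (auto simp: indicator_def mem_Times_iff)
      also have "\<dots> \<le> ennreal (norm (fst z - snd z))"
        using finX by (simp add: sum.delta')
      finally show "(\<Sum>x\<in>X. indicator ({x} \<times> UNIV) z * ennreal (norm (fst z - snd z))) \<le> ennreal (norm (fst z - snd z))" .
    qed
    finally show ?thesis .
  qed
  ultimately show ?thesis using that by blast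
qed

end

context fin_setup begin

lemma diam_le: "x \<in> X \<Longrightarrow> z \<in> X \<Longrightarrow> norm (x - y) \<le> norm (z - y) + diameter X"
proof -
  assume "x \<in> X" "z \<in> X"
  then have "dist x z \<le> diameter X" using finX by (intro diameter_bounded_bound) (auto simp: finite_imp_bounded)
  moreover have "norm (x - y) \<le> norm (x - z) + norm (z - y)" using norm_triangle_ineq[of "x - z" "z - y"] by simp
  ultimately show ?thesis by (simp add: dist_norm)
qed

lemma correction:
  fixes K :: "nat \<Rightarrow> 'a \<Rightarrow> real" and y :: "nat \<Rightarrow> 'a"
  assumes m: "m \<ge> 1" and Knn: "\<And>i x. i < m \<Longrightarrow> x \<in> X \<Longrightarrow> 0 \<le> K i x"
    and Ksum: "\<And>i. i < m \<Longrightarrow> (\<Sum>x\<in>X. K i x) = 1"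
  shows "\<exists>w\<in>Poly m. cst m y w \<le> (\<Sum>i<m. \<Sum>x\<in>X. K i x * norm (x - y i)) / m
            + diameter X * (\<Sum>x\<in>X. \<bar>(\<Sum>i<m. K i x) / m - p x\<bar>)"
proof -
  define q where "q x = (\<Sum>i<m. K i x) / m" for x
  define r where "r x = (if q x \<le> p x then 1 else p x / q x)" for x
  define e where "e x = max 0 (p x - q x)" for x
  define E where "E = (\<Sum>x\<in>X. e x)"
  define s where "s i = (\<Sum>z\<in>X. K i z * (1 - r z))" for i
  define w where "w i x = K i x * r x + (if E = 0 then 0 else s i * e x / E)" for i x
  define D where "D = diameter X"
  have mpos: "real m > 0" using m by simp
  have qnn: "x \<in> X \<Longrightarrow> 0 \<le> q x" for x unfolding q_def using Knn by (auto intro!: sum_nonneg divide_nonneg_nonneg)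
  have r01: "x \<in> X \<Longrightarrow> 0 \<le> r x \<and> r x \<le> 1" for x
    using qnn[of x] p_nonneg[of x] by (auto simp: r_def divide_le_eq_1)
  have qr: "x \<in> X \<Longrightarrow> q x * r x = min (q x) (p x)" for x
    using qnn[of x] p_nonneg[of x] by (auto simp: r_def)
  have enn: "0 \<le> e x" for x by (simp add: e_def)
  have Enn: "0 \<le> E" unfolding E_def using enn by (simp add: sum_nonneg)
  have sumq: "(\<Sum>x\<in>X. q x) = 1"
  proof -
    have "(\<Sum>x\<in>X. q x) = (\<Sum>i<m. \<Sum>x\<in>X. K i x) / m"
      unfolding q_def by (simp add: sum_divide_distrib[symmetric] sum.swap[of _ X])
    also have "\<dots> = 1" using Ksum mpos by simp
    finally show ?thesis .
  qed
  have snn: "i < m \<Longrightarrow> 0 \<le> s i" for i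
    unfolding s_def using Knn r01 by (auto intro!: sum_nonneg)
  \<comment> \<open>excess equals deficit\<close>
  have sum_excess: "(\<Sum>i<m. s i) / m = E"
  proof -
    have "(\<Sum>i<m. s i) / m = (\<Sum>z\<in>X. q z * (1 - r z))"
      unfolding s_def q_def by (simp add: sum_divide_distrib sum_distrib_right sum.swap[of _ X])
    also have "\<dots> = (\<Sum>z\<in>X. q z - min (q z) (p z))"
      by (intro sum.cong refl) (simp add: right_diff_distrib qr)
    also have "\<dots> = (\<Sum>z\<in>X. e z)"
    proof -
      have "(\<Sum>z\<in>X. q z - min (q z) (p z)) - (\<Sum>z\<in>X. e z) = (\<Sum>z\<in>X. q z) - (\<Sum>z\<in>X. p z)"
        by (simp add: sum_subtractf[symmetric] e_def) (intro sum.cong refl; simp add: min_def max_def)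
      then show ?thesis using sumq sum_p by simp
    qed
    finally show ?thesis by (simp add: E_def)
  qed
  have E0: "E = 0 \<Longrightarrow> x \<in> X \<Longrightarrow> q x = p x \<and> r x = 1" for x
  proof -
    assume "E = 0" "x \<in> X"
    then have ez: "\<forall>z\<in>X. e z = 0" unfolding E_def using finX enn by (simp add: sum_nonneg_eq_0_iff)
    have pq: "\<forall>z\<in>X. p z \<le> q z" using ez by (auto simp: e_def max_def split: if_splits)
    have "(\<Sum>z\<in>X. q z - p z) = 0" using sumq sum_p by (simp add: sum_subtractf)
    then have "\<forall>z\<in>X. q z - p z = 0" using finX pq by (subst sum_nonneg_eq_0_iff[symmetric]) auto
    then show ?thesis using \<open>x \<in> X\<close> by (simp add: r_def)
  qed
  have wP: "w \<in> Poly m"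
    unfolding Poly_def
  proof (intro CollectI conjI allI impI ballI)
    fix i x assume "i < m" "x \<in> X"
    then show "0 \<le> w i x" unfolding w_def using Knn r01 snn enn Enn
      by (auto intro!: add_nonneg_nonneg mult_nonneg_nonneg divide_nonneg_nonneg)
  next
    fix i assume i: "i < m"
    show "(\<Sum>x\<in>X. w i x) = 1"
    proof (cases "E = 0")
      case True
      then have "(\<Sum>x\<in>X. w i x) = (\<Sum>x\<in>X. K i x)" unfolding w_def using E0 by (intro sum.cong) auto
      then show ?thesis using Ksum i by simp
    next
      case False
      have "(\<Sum>x\<in>X. w i x) = (\<Sum>x\<in>X. K i x * r x) + s i * (\<Sum>x\<in>X. e x) / E"
        unfolding w_def using False by (simp add: sum.distrib sum_distrib_left sum_divide_distrib)
      also have "\<dots> = (\<Sum>x\<in>X. K i x * r x) + s i" using False by (simp add: E_def)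
      also have "\<dots> = (\<Sum>x\<in>X. K i x)" unfolding s_def
        by (simp add: sum.distrib[symmetric] right_diff_distrib)
      finally show ?thesis using Ksum i by simp
    qed
  next
    fix x assume x: "x \<in> X"
    show "(\<Sum>i<m. w i x) / m = p x"
    proof (cases "E = 0")
      case True
      then have "(\<Sum>i<m. w i x) / m = q x" unfolding w_def q_def using E0[OF True x] by simp
      then show ?thesis using E0[OF True x] by simp
    next
      case False
      have "(\<Sum>i<m. w i x) / m = q x * r x + ((\<Sum>i<m. s i) / m) * e x / E"
        unfolding w_def q_def using False
        by (simp add: sum.distrib sum_distrib_right sum_divide_distrib[symmetric] add_divide_distrib)
      also have "\<dots> = min (q x) (p x) + e x" using False by (simp add: sum_excess qr x)
      also have "\<dots> = p x" by (simp add: e_def min_def max_def)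
      finally show ?thesis .
    qed
  qed
  have row: "(\<Sum>x\<in>X. w i x * norm (x - y i)) \<le> (\<Sum>x\<in>X. K i x * norm (x - y i)) + D * s i" if i: "i < m" for i
  proof -
    define T where "T = (\<Sum>z\<in>X. K i z * (1 - r z) * norm (z - y i)) + D * s i"
    have sT: "s i * norm (x - y i) \<le> T" if x: "x \<in> X" for x
    proof -
      have "s i * norm (x - y i) = (\<Sum>z\<in>X. K i z * (1 - r z) * norm (x - y i))"
        unfolding s_def by (simp add: sum_distrib_right)
      also have "\<dots> \<le> (\<Sum>z\<in>X. K i z * (1 - r z) * (norm (z - y i) + D))"
        using Knn[OF i] r01 diam_le[OF x] unfolding D_def
        by (intro sum_mono mult_left_mono) (auto intro!: mult_nonneg_nonneg)
      also have "\<dots> = T" unfolding T_def s_def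
        by (simp add: distrib_left sum.distrib sum_distrib_left sum_distrib_right mult_ac)
      finally show ?thesis .
    qed
    have A: "(\<Sum>x\<in>X. (if E = 0 then 0 else s i * e x / E) * norm (x - y i)) \<le> (if E = 0 then 0 else T)"
    proof (cases "E = 0")
      case False
      have "(\<Sum>x\<in>X. (s i * e x / E) * norm (x - y i)) = (\<Sum>x\<in>X. (e x / E) * (s i * norm (x - y i)))"
        by (intro sum.cong refl) (simp add: field_simps)
      also have "\<dots> \<le> (\<Sum>x\<in>X. (e x / E) * T)"
        using sT enn Enn by (intro sum_mono mult_left_mono) auto
      also have "\<dots> = T" using False by (simp add: sum_distrib_right[symmetric] sum_divide_distrib[symmetric] E_def)
      finally show ?thesis using False by simp
    qed simp
    have T0: "E = 0 \<Longrightarrow> (\<Sum>z\<in>X. K i z * (1 - r z) * norm (z - y i)) = 0 \<and> s i = 0"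
      using E0 unfolding s_def by auto
    have "(\<Sum>x\<in>X. w i x * norm (x - y i)) = (\<Sum>x\<in>X. K i x * r x * norm (x - y i))
        + (\<Sum>x\<in>X. (if E = 0 then 0 else s i * e x / E) * norm (x - y i))"
      unfolding w_def by (simp add: distrib_right sum.distrib)
    also have "\<dots> \<le> (\<Sum>x\<in>X. K i x * r x * norm (x - y i)) + (if E = 0 then 0 else T)"
      using A by simp
    also have "\<dots> \<le> (\<Sum>x\<in>X. K i x * norm (x - y i)) + D * s i"
    proof -
      have "(\<Sum>x\<in>X. K i x * r x * norm (x - y i)) + (\<Sum>z\<in>X. K i z * (1 - r z) * norm (z - y i))
          = (\<Sum>x\<in>X. K i x * norm (x - y i))"
        by (simp add: sum.distrib[symmetric] algebra_simps)
      moreover have "D \<ge> 0" unfolding D_def by (simp add: diameter_ge_0 finX finite_imp_bounded)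
      ultimately show ?thesis using T0 snn[OF i] unfolding T_def by (cases "E = 0") auto
    qed
    finally show ?thesis .
  qed
  have "cst m y w \<le> ((\<Sum>i<m. \<Sum>x\<in>X. K i x * norm (x - y i)) + D * (\<Sum>i<m. s i)) / m"
  proof -
    have "(\<Sum>i<m. \<Sum>x\<in>X. w i x * norm (x - y i)) \<le> (\<Sum>i<m. (\<Sum>x\<in>X. K i x * norm (x - y i)) + D * s i)"
      by (rule sum_mono) (use row in auto)
    also have "\<dots> = (\<Sum>i<m. \<Sum>x\<in>X. K i x * norm (x - y i)) + D * (\<Sum>i<m. s i)"
      by (simp add: sum.distrib sum_distrib_left)
    finally show ?thesis unfolding cst_def using mpos by (intro divide_right_mono) auto
  qed
  also have "\<dots> = (\<Sum>i<m. \<Sum>x\<in>X. K i x * norm (x - y i)) / m + D * E"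
    using sum_excess[symmetric] mpos by (simp add: add_divide_distrib)
  also have "E \<le> (\<Sum>x\<in>X. \<bar>q x - p x\<bar>)"
    unfolding E_def e_def by (intro sum_mono) auto
  finally have "cst m y w \<le> (\<Sum>i<m. \<Sum>x\<in>X. K i x * norm (x - y i)) / m + D * (\<Sum>x\<in>X. \<bar>q x - p x\<bar>)"
    using diameter_ge_0[of X] finX by (simp add: D_def finite_imp_bounded mult_left_mono)
  then show ?thesis using wP unfolding q_def D_def by blast
qed

end

context fin_setup begin

definition Qm :: "nat \<Rightarrow> (nat \<Rightarrow> 'a) \<Rightarrow> 'a measure" where
  "Qm m y = distr (measure_pmf (pmf_of_set {..<m})) borel y"

lemma Qm_sets: "sets (Qm m y) = sets borel" by (simp add: Qm_def)

lemma Qm_prob: "m \<ge> 1 \<Longrightarrow> prob_space (Qm m y)"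
  unfolding Qm_def by (intro prob_space.prob_space_distr) (auto simp: measure_pmf.prob_space_axioms)

lemma Qm_nn_integral:
  assumes "m \<ge> 1" "f \<in> borel_measurable borel"
  shows "(\<integral>\<^sup>+z. f z \<partial>Qm m y) = (\<Sum>i<m. f (y i)) / of_nat m"
proof -
  have "(\<integral>\<^sup>+z. f z \<partial>Qm m y) = (\<integral>\<^sup>+i. f (y i) \<partial>measure_pmf (pmf_of_set {..<m}))"
    unfolding Qm_def using assms(2) by (subst nn_integral_distr) auto
  also have "\<dots> = (\<Sum>i\<in>{..<m}. f (y i)) / of_nat (card {..<m})"
    using assms(1) by (intro nn_integral_pmf_of_set) (auto simp: lessThan_empty_iff)
  finally show ?thesis by simp
qed

lemma Qm_emeasure:
  assumes "m \<ge> 1" "B \<in> sets borel"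
  shows "emeasure (Qm m y) B = (\<Sum>i<m. indicator B (y i)) / of_nat m"
proof -
  have "emeasure (Qm m y) B = (\<integral>\<^sup>+z. indicator B z \<partial>Qm m y)"
    using assms by (simp add: Qm_sets)
  also have "\<dots> = (\<Sum>i<m. indicator B (y i)) / of_nat m"
    using assms by (subst Qm_nn_integral) auto
  finally show ?thesis .
qed

lemma Poly_nonempty: "m \<ge> 1 \<Longrightarrow> (\<lambda>i x. p x) \<in> Poly m"
  unfolding Poly_def using sum_p p_nonneg by auto

lemma W1_Qm_upper:
  assumes m: "m \<ge> 1" and w: "w \<in> Poly m"
  shows "W1 P (Qm m y) \<le> ennreal (cst m y w)"
proof -
  define R where "R = measure_pmf (return_pmf ())"
  have R: "prob_space R" unfolding R_def by (rule measure_pmf.prob_space_axioms)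
  have spR: "space R = UNIV" by (simp add: R_def)
  have "W1 P (Qm m y) \<le> (\<integral>\<^sup>+\<omega>. ennreal (cst m (\<lambda>i. (\<lambda>_. y i) \<omega>) ((\<lambda>_. w) \<omega>)) \<partial>R)"
  proof (rule coupling_construct[OF R m])
    show "(\<lambda>_. y i) \<in> borel_measurable R" for i by simp
    show "(\<lambda>\<omega>. w i x) \<in> borel_measurable R" for i x by simp
    show "w \<in> Poly m" by (rule w)
    show "sets (Qm m y) = sets borel" by (rule Qm_sets)
    fix B :: "'a set" assume B: "B \<in> sets borel"
    have "emeasure R ((\<lambda>_. y i) -` B \<inter> space R) = indicator B (y i)" for i
      by (cases "y i \<in> B") (auto simp: R_def spR measure_pmf.emeasure_space_1)
    then show "emeasure (Qm m y) B = (\<Sum>i<m. emeasure R ((\<lambda>_. y i) -` B \<inter> space R)) / of_nat m"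
      using Qm_emeasure[OF m B] by simp
  qed
  also have "\<dots> = ennreal (cst m y w)"
    by (simp add: R_def measure_pmf.emeasure_space_1)
  finally show ?thesis .
qed

lemma W1_Qm_lower:
  assumes m: "m \<ge> 1" and pi: "\<pi> \<in> couplings P (Qm m y)"
  shows "\<exists>w\<in>Poly m. ennreal (cst m y w) \<le> (\<integral>\<^sup>+z. ennreal (norm (fst z - snd z)) \<partial>\<pi>)"
proof -
  obtain k where km: "\<And>x. (\<lambda>z. k z x) \<in> borel_measurable borel"
    and knn: "\<And>z x. 0 \<le> k z x" and ksum: "\<And>z. (\<Sum>x\<in>X. k z x) = 1"
    and kint: "\<And>x. x\<in>X \<Longrightarrow> (\<integral>\<^sup>+z. ennreal (k z x) \<partial>Qm m y) = ennreal (p x)"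
    and kcost: "(\<integral>\<^sup>+z. ennreal (\<Sum>x\<in>X. k z x * norm (x - z)) \<partial>Qm m y) \<le> (\<integral>\<^sup>+z. ennreal (norm (fst z - snd z)) \<partial>\<pi>)"
    using disintegrate[OF Qm_prob[OF m] Qm_sets pi] by blast
  define w where "w i x = k (y i) x" for i x
  have mpos: "real m > 0" using m by simp
  have ennsum: "(\<Sum>i<m. ennreal (f i)) / of_nat m = ennreal ((\<Sum>i<m. f i) / m)" if "\<And>i. 0 \<le> f i" for f :: "nat \<Rightarrow> real"
    using that mpos by (simp add: sum_nonneg divide_ennreal ennreal_of_nat_eq_real_of_nat)
  have wP: "w \<in> Poly m"
    unfolding Poly_def
  proof (intro CollectI conjI allI impI ballI)
    show "0 \<le> w i x" for i x by (simp add: w_def knn)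
    show "(\<Sum>x\<in>X. w i x) = 1" for i by (simp add: w_def ksum)
    fix x assume x: "x \<in> X"
    have "ennreal ((\<Sum>i<m. w i x) / m) = (\<Sum>i<m. ennreal (k (y i) x)) / of_nat m"
      using ennsum[of "\<lambda>i. k (y i) x"] knn by (simp add: w_def)
    also have "\<dots> = (\<integral>\<^sup>+z. ennreal (k z x) \<partial>Qm m y)"
      using km m by (subst Qm_nn_integral) auto
    also have "\<dots> = ennreal (p x)" by (rule kint[OF x])
    finally show "(\<Sum>i<m. w i x) / m = p x"
      using knn p_nonneg by (subst (asm) ennreal_inj) (auto simp: w_def intro!: sum_nonneg divide_nonneg_nonneg)
  qed
  moreover have eq: "ennreal (cst m y w) = (\<integral>\<^sup>+z. ennreal (\<Sum>x\<in>X. k z x * norm (x - z)) \<partial>Qm m y)"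
  proof -
    have "(\<integral>\<^sup>+z. ennreal (\<Sum>x\<in>X. k z x * norm (x - z)) \<partial>Qm m y)
        = (\<Sum>i<m. ennreal (\<Sum>x\<in>X. k (y i) x * norm (x - y i))) / of_nat m"
      using km m by (subst Qm_nn_integral) auto
    also have "\<dots> = ennreal (cst m y w)"
      unfolding cst_def w_def using knn by (subst ennsum) (auto intro!: sum_nonneg)
    finally show ?thesis by simp
  qed
  show ?thesis using kcost eq wP by (intro bexI[of _ w]) auto
qed

definition V :: "nat \<Rightarrow> (nat \<Rightarrow> 'a) \<Rightarrow> real" where
  "V m y = enn2real (W1 P (Qm m y))"

lemma cst_nonneg: "w \<in> Poly m \<Longrightarrow> 0 \<le> cst m y w"
  unfolding cst_def Poly_def by (auto intro!: sum_nonneg divide_nonneg_nonneg)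

lemma W1_Qm_fin:
  assumes m: "m \<ge> 1" shows "W1 P (Qm m y) = ennreal (V m y)"
proof -
  have "W1 P (Qm m y) \<le> ennreal (cst m y (\<lambda>i x. p x))"
    by (rule W1_Qm_upper[OF m Poly_nonempty[OF m]])
  then have "W1 P (Qm m y) < \<top>" using ennreal_less_top le_less_trans by blast
  then show ?thesis unfolding V_def by simp
qed

lemma V_le: "m \<ge> 1 \<Longrightarrow> w \<in> Poly m \<Longrightarrow> V m y \<le> cst m y w"
  using W1_Qm_upper[of m w y] W1_Qm_fin[of m y] cst_nonneg[of w m y] by (simp add: ennreal_le_iff)

lemma V_nonneg: "0 \<le> V m y" by (simp add: V_def)

lemma V_approx:
  assumes m: "m \<ge> 1" and e: "\<epsilon> > 0"
  shows "\<exists>w\<in>Poly m. cst m y w < V m y + \<epsilon>"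
proof -
  have "W1 P (Qm m y) < ennreal (V m y + \<epsilon>)"
    using W1_Qm_fin[OF m] e V_nonneg[of m y] by (simp add: ennreal_lessI)
  then obtain \<pi> where pi: "\<pi> \<in> couplings P (Qm m y)"
    and lt: "(\<integral>\<^sup>+z. ennreal (norm (fst z - snd z)) \<partial>\<pi>) < ennreal (V m y + \<epsilon>)"
    unfolding W1_def by (auto simp: INF_less_iff)
  obtain w where w: "w \<in> Poly m" and le: "ennreal (cst m y w) \<le> (\<integral>\<^sup>+z. ennreal (norm (fst z - snd z)) \<partial>\<pi>)"
    using W1_Qm_lower[OF m pi] by blast
  have "ennreal (cst m y w) < ennreal (V m y + \<epsilon>)" using le lt by simp
  then have "cst m y w < V m y + \<epsilon>" using cst_nonneg[OF w] by (simp add: ennreal_less_iff)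
  then show ?thesis using w by blast
qed

lemma cst_lip:
  assumes w: "w \<in> Poly m"
  shows "cst m y w \<le> cst m z w + (\<Sum>i<m. norm (y i - z i)) / m"
proof -
  have "(\<Sum>x\<in>X. w i x * norm (x - y i)) \<le> (\<Sum>x\<in>X. w i x * norm (x - z i)) + norm (y i - z i)" if i: "i < m" for i
  proof -
    have "(\<Sum>x\<in>X. w i x * norm (x - y i)) \<le> (\<Sum>x\<in>X. w i x * (norm (x - z i) + norm (y i - z i)))"
    proof (rule sum_mono)
      fix x assume "x \<in> X"
      have "norm (x - y i) \<le> norm (x - z i) + norm (y i - z i)"
        using norm_triangle_ineq4[of "x - z i" "y i - z i"] by simp
      then show "w i x * norm (x - y i) \<le> w i x * (norm (x - z i) + norm (y i - z i))"
        using w i \<open>x \<in> X\<close> by (intro mult_left_mono) (auto simp: Poly_def)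
    qed
    also have "\<dots> = (\<Sum>x\<in>X. w i x * norm (x - z i)) + norm (y i - z i)"
      using w i by (simp add: distrib_left sum.distrib sum_distrib_right[symmetric] Poly_def)
    finally show ?thesis .
  qed
  then have "(\<Sum>i<m. \<Sum>x\<in>X. w i x * norm (x - y i)) \<le> (\<Sum>i<m. (\<Sum>x\<in>X. w i x * norm (x - z i)) + norm (y i - z i))"
    by (intro sum_mono) auto
  then show ?thesis unfolding cst_def add_divide_distrib[symmetric]
    by (intro divide_right_mono) (auto simp: sum.distrib)
qed

lemma V_lip:
  assumes m: "m \<ge> 1"
  shows "V m y \<le> V m z + (\<Sum>i<m. norm (y i - z i)) / m"
proof (rule field_le_epsilon)
  fix e :: real assume e: "e > 0"
  obtain w where w: "w \<in> Poly m" and lt: "cst m z w < V m z + e" using V_approx[OF m e] by blast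
  have "V m y \<le> cst m y w" by (rule V_le[OF m w])
  also have "\<dots> \<le> cst m z w + (\<Sum>i<m. norm (y i - z i)) / m" by (rule cst_lip[OF w])
  finally show "V m y \<le> V m z + (\<Sum>i<m. norm (y i - z i)) / m + e" using lt by simp
qed

end

lemma abs_exp_le_sqrt:
  fixes M :: "'b measure" and T :: "'b \<Rightarrow> real"
  assumes M: "prob_space M" and T: "integrable M T" and T2: "integrable M (\<lambda>\<omega>. (T \<omega>)^2)"
  shows "(\<integral>\<omega>. \<bar>T \<omega>\<bar> \<partial>M) \<le> sqrt (\<integral>\<omega>. (T \<omega>)^2 \<partial>M)"
proof -
  interpret prob_space M by (rule M)
  define a where "a = (\<integral>\<omega>. \<bar>T \<omega>\<bar> \<partial>M)"
  have aT: "integrable M (\<lambda>\<omega>. \<bar>T \<omega>\<bar>)" using T by simp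
  have "0 \<le> (\<integral>\<omega>. (\<bar>T \<omega>\<bar> - a)^2 \<partial>M)" by simp
  also have "(\<integral>\<omega>. (\<bar>T \<omega>\<bar> - a)^2 \<partial>M) = (\<integral>\<omega>. (T \<omega>)^2 - 2 * a * \<bar>T \<omega>\<bar> + a^2 \<partial>M)"
    by (intro Bochner_Integration.integral_cong refl) (simp add: power2_eq_square algebra_simps)
  also have "\<dots> = (\<integral>\<omega>. (T \<omega>)^2 \<partial>M) - 2 * a * a + a^2"
    using aT T2 by (simp add: a_def prob_space)
  finally have "a^2 \<le> (\<integral>\<omega>. (T \<omega>)^2 \<partial>M)" by (simp add: power2_eq_square)
  then show ?thesis unfolding a_def by (rule real_le_rsqrt)
qed

lemma var_bound:
  fixes M :: "'b measure" and Y :: "nat \<Rightarrow> 'b \<Rightarrow> 'a::euclidean_space" and Q :: "'a measure" and f :: "'a \<Rightarrow> real"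
  assumes M: "prob_space M" and m: "m \<ge> 1"
   and Y_rv: "\<And>i. i<m \<Longrightarrow> Y i \<in> borel_measurable M" and Y_dist: "\<And>i. i<m \<Longrightarrow> distr M borel (Y i) = Q"
   and indep: "prob_space.indep_vars M (\<lambda>_. borel) Y {..<m}"
   and fm: "f \<in> borel_measurable borel" and f2: "integrable Q (\<lambda>y. (f y)^2)"
  shows "integrable M (\<lambda>\<omega>. \<bar>(\<Sum>i<m. f (Y i \<omega>)) / m - (\<integral>y. f y \<partial>Q)\<bar>)"
    and "(\<integral>\<omega>. \<bar>(\<Sum>i<m. f (Y i \<omega>)) / m - (\<integral>y. f y \<partial>Q)\<bar> \<partial>M) \<le> sqrt ((\<integral>y. (f y)^2 \<partial>Q) / m)"
proof -
  interpret prob_space M by (rule M)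
  have Q0: "Q = distr M borel (Y 0)" using Y_dist[of 0] m by simp
  interpret Q: prob_space Q unfolding Q0 using Y_rv[of 0] m by (intro prob_space_distr) auto
  have fQ: "integrable Q f"
  proof (rule Q.square_integrable_imp_integrable)
    show "f \<in> borel_measurable Q" using fm Q0 by simp
  qed (rule f2)
  define \<mu> where "\<mu> = (\<integral>y. f y \<partial>Q)"
  have intY: "integrable M (\<lambda>\<omega>. h (Y i \<omega>))" "(\<integral>\<omega>. h (Y i \<omega>) \<partial>M) = (\<integral>y. h y \<partial>Q)"
    if "i < m" "integrable Q h" "h \<in> borel_measurable borel" for i and h :: "'a \<Rightarrow> real"
  proof -
    have "integrable (distr M borel (Y i)) h" using that Y_dist by simp
    then show "integrable M (\<lambda>\<omega>. h (Y i \<omega>))" using that Y_rv by (subst (asm) integrable_distr_eq) auto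
    show "(\<integral>\<omega>. h (Y i \<omega>) \<partial>M) = (\<integral>y. h y \<partial>Q)"
      using that Y_rv Y_dist[of i, symmetric] by (simp add: integral_distr)
  qed
  define g where "g i \<omega> = f (Y i \<omega>) - \<mu>" for i \<omega>
  have g_int: "integrable M (g i)" if "i < m" for i
    unfolding g_def using intY(1)[OF that fQ fm] by simp
  have g_mean: "(\<integral>\<omega>. g i \<omega> \<partial>M) = 0" if "i < m" for i
    unfolding g_def using intY[OF that fQ fm] by (simp add: \<mu>_def prob_space)
  have g2_int: "integrable M (\<lambda>\<omega>. (g i \<omega>)^2)" if "i < m" for i
  proof -
    have "integrable M (\<lambda>\<omega>. (f (Y i \<omega>))^2 - 2 * \<mu> * f (Y i \<omega>) + \<mu>^2)"
      using intY(1)[OF that f2] intY(1)[OF that fQ fm] fm by auto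
    then show ?thesis unfolding g_def by (simp add: power2_eq_square algebra_simps)
  qed
  have g2_le: "(\<integral>\<omega>. (g i \<omega>)^2 \<partial>M) \<le> (\<integral>y. (f y)^2 \<partial>Q)" if "i < m" for i
  proof -
    have "(\<integral>\<omega>. (g i \<omega>)^2 \<partial>M) = (\<integral>\<omega>. (f (Y i \<omega>))^2 - 2 * \<mu> * f (Y i \<omega>) + \<mu>^2 \<partial>M)"
      unfolding g_def by (intro Bochner_Integration.integral_cong refl) (simp add: power2_eq_square algebra_simps)
    also have "\<dots> = (\<integral>y. (f y)^2 \<partial>Q) - 2 * \<mu> * \<mu> + \<mu>^2"
      using intY[OF that f2] intY[OF that fQ fm] fm by (simp add: prob_space \<mu>_def)
    also have "\<dots> \<le> (\<integral>y. (f y)^2 \<partial>Q)" by (simp add: power2_eq_square)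
    finally show ?thesis .
  qed
  have gg: "integrable M (\<lambda>\<omega>. g i \<omega> * g j \<omega>) \<and> (\<integral>\<omega>. g i \<omega> * g j \<omega> \<partial>M) = 0"
    if ij: "i < m" "j < m" "i \<noteq> j" for i j
  proof -
    have ind: "indep_vars (\<lambda>_. borel) g {i, j}"
    proof -
      have "indep_vars (\<lambda>_. borel) Y {i, j}" using ij by (intro indep_vars_subset[OF indep]) auto
      then have "indep_vars (\<lambda>_. borel) (\<lambda>l \<omega>. (\<lambda>y. f y - \<mu>) (Y l \<omega>)) {i, j}"
        by (rule indep_vars_compose2) (use fm in auto)
      then show ?thesis unfolding g_def by simp
    qed
    have "integrable M (\<lambda>\<omega>. \<Prod>l\<in>{i, j}. g l \<omega>)" "(\<integral>\<omega>. (\<Prod>l\<in>{i, j}. g l \<omega>) \<partial>M) = (\<Prod>l\<in>{i, j}. \<integral>\<omega>. g l \<omega> \<partial>M)"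
    proof -
      have li: "\<And>l. l \<in> {i, j} \<Longrightarrow> integrable M (g l)" using g_int ij by auto
      show "integrable M (\<lambda>\<omega>. \<Prod>l\<in>{i, j}. g l \<omega>)" by (rule indep_vars_integrable[OF _ ind li]) simp
      show "(\<integral>\<omega>. (\<Prod>l\<in>{i, j}. g l \<omega>) \<partial>M) = (\<Prod>l\<in>{i, j}. \<integral>\<omega>. g l \<omega> \<partial>M)"
        by (rule indep_vars_lebesgue_integral[OF _ ind li]) simp
    qed
    then show ?thesis using ij g_mean by simp
  qed
  define S where "S \<omega> = (\<Sum>i<m. g i \<omega>)" for \<omega>
  have S_int: "integrable M S" unfolding S_def using g_int by auto
  have S2: "(S \<omega>)^2 = (\<Sum>i<m. \<Sum>j<m. g i \<omega> * g j \<omega>)" for \<omega>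
    unfolding S_def power2_eq_square by (simp add: sum_product)
  have gij_int: "integrable M (\<lambda>\<omega>. g i \<omega> * g j \<omega>)" if "i < m" "j < m" for i j
    using gg[OF that] g2_int[OF that(1)] by (cases "i = j") (auto simp: power2_eq_square)
  have S2_int: "integrable M (\<lambda>\<omega>. (S \<omega>)^2)" unfolding S2 using gij_int by (intro Bochner_Integration.integrable_sum) auto
  have "(\<integral>\<omega>. (S \<omega>)^2 \<partial>M) = (\<Sum>i<m. \<Sum>j<m. \<integral>\<omega>. g i \<omega> * g j \<omega> \<partial>M)"
  proof -
    have "(\<integral>\<omega>. (\<Sum>i<m. \<Sum>j<m. g i \<omega> * g j \<omega>) \<partial>M) = (\<Sum>i<m. \<integral>\<omega>. (\<Sum>j<m. g i \<omega> * g j \<omega>) \<partial>M)"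
      using gij_int by (intro Bochner_Integration.integral_sum Bochner_Integration.integrable_sum) auto
    also have "\<dots> = (\<Sum>i<m. \<Sum>j<m. \<integral>\<omega>. g i \<omega> * g j \<omega> \<partial>M)"
      using gij_int by (intro sum.cong refl Bochner_Integration.integral_sum) auto
    finally show ?thesis unfolding S2 .
  qed
  also have "\<dots> = (\<Sum>i<m. \<integral>\<omega>. (g i \<omega>)^2 \<partial>M)"
  proof (intro sum.cong refl)
    fix i assume i: "i \<in> {..<m}"
    have "(\<Sum>j<m. \<integral>\<omega>. g i \<omega> * g j \<omega> \<partial>M) = (\<Sum>j<m. if j = i then \<integral>\<omega>. (g i \<omega>)^2 \<partial>M else 0)"
      using gg i by (intro sum.cong refl) (auto simp: power2_eq_square)
    also have "\<dots> = (\<integral>\<omega>. (g i \<omega>)^2 \<partial>M)" using i by simp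
    finally show "(\<Sum>j<m. \<integral>\<omega>. g i \<omega> * g j \<omega> \<partial>M) = (\<integral>\<omega>. (g i \<omega>)^2 \<partial>M)" .
  qed
  also have "\<dots> \<le> (\<Sum>i<m. \<integral>y. (f y)^2 \<partial>Q)" using g2_le by (intro sum_mono) auto
  finally have ES2: "(\<integral>\<omega>. (S \<omega>)^2 \<partial>M) \<le> m * (\<integral>y. (f y)^2 \<partial>Q)" by simp
  define T where "T \<omega> = S \<omega> / m" for \<omega>
  have Teq: "T \<omega> = (\<Sum>i<m. f (Y i \<omega>)) / m - \<mu>" for \<omega>
    unfolding T_def S_def g_def using m by (simp add: sum_subtractf field_simps)
  have T_int: "integrable M T" unfolding T_def using S_int by simp
  have T2_int: "integrable M (\<lambda>\<omega>. (T \<omega>)^2)" unfolding T_def using S2_int by (simp add: power_divide)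
  have "(\<integral>\<omega>. (T \<omega>)^2 \<partial>M) = (\<integral>\<omega>. (S \<omega>)^2 \<partial>M) / m^2"
    unfolding T_def by (simp add: power_divide)
  also have "\<dots> \<le> m * (\<integral>y. (f y)^2 \<partial>Q) / m^2" using ES2 by (intro divide_right_mono) auto
  also have "\<dots> = (\<integral>y. (f y)^2 \<partial>Q) / m" using m by (simp add: power2_eq_square)
  finally have ET2: "(\<integral>\<omega>. (T \<omega>)^2 \<partial>M) \<le> (\<integral>y. (f y)^2 \<partial>Q) / m" .
  show "integrable M (\<lambda>\<omega>. \<bar>(\<Sum>i<m. f (Y i \<omega>)) / m - (\<integral>y. f y \<partial>Q)\<bar>)"
    using T_int unfolding Teq \<mu>_def by simp
  have "(\<integral>\<omega>. \<bar>T \<omega>\<bar> \<partial>M) \<le> sqrt (\<integral>\<omega>. (T \<omega>)^2 \<partial>M)"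
    by (rule abs_exp_le_sqrt[OF M T_int T2_int])
  also have "\<dots> \<le> sqrt ((\<integral>y. (f y)^2 \<partial>Q) / m)" using ET2 by simp
  finally show "(\<integral>\<omega>. \<bar>(\<Sum>i<m. f (Y i \<omega>)) / m - (\<integral>y. f y \<partial>Q)\<bar> \<partial>M) \<le> sqrt ((\<integral>y. (f y)^2 \<partial>Q) / m)"
    unfolding Teq \<mu>_def .
qed


locale main_setup = fin_setup X P for X :: "'a::euclidean_space set" and P +
  fixes Q :: "'a measure" and M :: "'b measure" and Y :: "nat \<Rightarrow> 'b \<Rightarrow> 'a" and m :: nat
  assumes Qprob: "prob_space Q" and Qsets: "sets Q = sets borel" and Q2: "integrable Q (\<lambda>y. (norm y)^2)"
    and Mprob: "prob_space M" and m1: "m \<ge> 1"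
    and Y_rv: "\<And>i. i < m \<Longrightarrow> Y i \<in> borel_measurable M"
    and Y_dist: "\<And>i. i < m \<Longrightarrow> distr M borel (Y i) = Q"
    and Y_indep: "prob_space.indep_vars M (\<lambda>_. borel) Y {..<m}"
begin

definition dsum :: "(nat \<Rightarrow> 'a) \<Rightarrow> (nat \<Rightarrow> 'a) \<Rightarrow> real" where
  "dsum y z = (\<Sum>i<m. norm (y i - z i))"

lemma dsum_sym: "dsum y z = dsum z y"
  unfolding dsum_def by (simp add: norm_minus_commute)

lemma dsum_nonneg: "0 \<le> dsum y z"
  unfolding dsum_def by (simp add: sum_nonneg)

lemma grid_exists:
  "\<exists>g :: nat \<Rightarrow> (nat \<Rightarrow> 'a). \<forall>y \<delta>. \<delta> > 0 \<longrightarrow> (\<exists>n. dsum y (g n) < \<delta>)"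
proof -
  obtain D :: "'a set" where D: "countable D" "\<And>U. open U \<Longrightarrow> U \<noteq> {} \<Longrightarrow> \<exists>d\<in>D. d \<in> U"
    using countable_dense_setE by blast
  define G where "G = PiE {..<m} (\<lambda>_. D)"
  have cG: "countable G" unfolding G_def using D(1) by (intro countable_PiE) auto
  define g where "g = from_nat_into G"
  have "\<exists>n. dsum y (g n) < \<delta>" if d: "\<delta> > 0" for y \<delta>
  proof -
    have mpos: "real m > 0" using m1 by simp
    have "\<forall>i. \<exists>d. i < m \<longrightarrow> d \<in> D \<and> d \<in> ball (y i) (\<delta> / m)"
    proof
      fix i
      have "\<delta> / m > 0" using d mpos by simp
      then have "ball (y i) (\<delta> / m) \<noteq> {}" by simp
      then show "\<exists>d. i < m \<longrightarrow> d \<in> D \<and> d \<in> ball (y i) (\<delta> / m)" using D(2)[of "ball (y i) (\<delta> / m)"] by auto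
    qed
    then obtain c where c: "\<And>i. i < m \<Longrightarrow> c i \<in> D \<and> c i \<in> ball (y i) (\<delta> / m)" by metis
    define z where "z = restrict c {..<m}"
    have zG: "z \<in> G" unfolding z_def G_def using c by auto
    then obtain n where n: "g n = z" unfolding g_def using from_nat_into_surj[OF cG] by blast
    have "dsum y z < (\<Sum>i<m. \<delta> / m)"
      unfolding dsum_def
    proof (rule sum_strict_mono)
      show "{..<m} \<noteq> {}" using m1 by (auto simp: lessThan_empty_iff)
      fix i assume "i \<in> {..<m}"
      then show "norm (y i - z i) < \<delta> / m" using c[of i] by (simp add: z_def dist_norm)
    qed auto
    also have "\<dots> = \<delta>" using mpos by simp
    finally show ?thesis using n by blast
  qed
  then show ?thesis by blast
qed

lemma V_char:
  assumes g: "\<And>y \<delta>. \<delta> > 0 \<Longrightarrow> \<exists>n. dsum y (g n) < \<delta>"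
  shows "V m y < t \<longleftrightarrow> (\<exists>n. V m (g n) + dsum y (g n) / m < t)"
proof
  assume "\<exists>n. V m (g n) + dsum y (g n) / m < t"
  then obtain n where "V m (g n) + dsum y (g n) / m < t" by blast
  moreover have "V m y \<le> V m (g n) + dsum y (g n) / m" using V_lip[OF m1] unfolding dsum_def by blast
  ultimately show "V m y < t" by simp
next
  assume lt: "V m y < t"
  define \<delta> where "\<delta> = (t - V m y) / 2"
  have d: "\<delta> > 0" using lt by (simp add: \<delta>_def)
  obtain n where n: "dsum y (g n) < \<delta>" using g[OF d] by blast
  have mge: "real m \<ge> 1" using m1 by simp
  have dm: "dsum y (g n) / m \<le> dsum y (g n)" using mge dsum_nonneg[of y "g n"] by (simp add: divide_le_eq mult_le_cancel_left1)
  have "V m (g n) \<le> V m y + dsum (g n) y / m" using V_lip[OF m1] unfolding dsum_def by blast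
  then have "V m (g n) + dsum y (g n) / m \<le> V m y + 2 * dsum y (g n)" using dm by (simp add: dsum_sym)
  also have "\<dots> < t" using n by (simp add: \<delta>_def)
  finally show "\<exists>n. V m (g n) + dsum y (g n) / m < t" by blast
qed

lemma dsum_meas: "(\<lambda>\<omega>. dsum (\<lambda>i. Y i \<omega>) z) \<in> borel_measurable M"
  unfolding dsum_def using Y_rv by (intro borel_measurable_sum) auto

lemma V_meas: "(\<lambda>\<omega>. V m (\<lambda>i. Y i \<omega>)) \<in> borel_measurable M"
proof -
  define g where "g = (SOME g :: nat \<Rightarrow> (nat \<Rightarrow> 'a). \<forall>y \<delta>. \<delta> > 0 \<longrightarrow> (\<exists>n. dsum y (g n) < \<delta>))"
  have g0: "\<forall>y \<delta>. \<delta> > 0 \<longrightarrow> (\<exists>n. dsum y (g n) < \<delta>)"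
    unfolding g_def by (rule someI_ex[OF grid_exists])
  have g: "\<And>y \<delta>. \<delta> > 0 \<Longrightarrow> \<exists>n. dsum y (g n) < \<delta>" using g0 by blast
  show ?thesis
  proof (subst borel_measurable_iff_less, intro allI)
    fix t
    have "{\<omega> \<in> space M. V m (\<lambda>i. Y i \<omega>) < t} = (\<Union>n. {\<omega> \<in> space M. V m (g n) + dsum (\<lambda>i. Y i \<omega>) (g n) / m < t})"
    proof (rule set_eqI)
      fix \<omega>
      show "\<omega> \<in> {\<omega> \<in> space M. V m (\<lambda>i. Y i \<omega>) < t} \<longleftrightarrow> \<omega> \<in> (\<Union>n. {\<omega> \<in> space M. V m (g n) + dsum (\<lambda>i. Y i \<omega>) (g n) / m < t})"
        using V_char[OF g, of "\<lambda>i. Y i \<omega>" t] by blast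
    qed
    also have "\<dots> \<in> sets M"
    proof (rule sets.countable_UN)
      show "range (\<lambda>n. {\<omega> \<in> space M. V m (g n) + dsum (\<lambda>i. Y i \<omega>) (g n) / m < t}) \<subseteq> sets M"
      proof (rule image_subsetI)
      fix n
      define A where "A = {\<omega> \<in> space M. V m (g n) + dsum (\<lambda>i. Y i \<omega>) (g n) / m < t}"
      have "(\<lambda>\<omega>. V m (g n) + dsum (\<lambda>i. Y i \<omega>) (g n) / m) \<in> borel_measurable M"
        using dsum_meas[of "g n"] by (intro borel_measurable_add borel_measurable_divide) auto
      then show "{\<omega> \<in> space M. V m (g n) + dsum (\<lambda>i. Y i \<omega>) (g n) / m < t} \<in> sets M"
        unfolding borel_measurable_iff_less by blast
    qed
    qed
    finally show "{\<omega> \<in> space M. V m (\<lambda>i. Y i \<omega>) < t} \<in> sets M" .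
  qed
qed

end

context main_setup begin

lemma Yint:
  fixes h :: "'a \<Rightarrow> real"
  assumes "i < m" "integrable Q h" "h \<in> borel_measurable borel"
  shows "integrable M (\<lambda>\<omega>. h (Y i \<omega>))" "(\<integral>\<omega>. h (Y i \<omega>) \<partial>M) = (\<integral>y. h y \<partial>Q)"
proof -
  have "integrable (distr M borel (Y i)) h" using assms Y_dist by simp
  moreover have "integrable (distr M borel (Y i)) h = integrable M (\<lambda>\<omega>. h (Y i \<omega>))"
    by (rule integrable_distr_eq) (use Y_rv assms in auto)
  ultimately show "integrable M (\<lambda>\<omega>. h (Y i \<omega>))" by simp
  show "(\<integral>\<omega>. h (Y i \<omega>) \<partial>M) = (\<integral>y. h y \<partial>Q)"
    using assms Y_rv Y_dist[of i, symmetric] by (simp add: integral_distr)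
qed

lemma mQ: "f \<in> borel_measurable Q \<longleftrightarrow> f \<in> borel_measurable borel" for f :: "'a \<Rightarrow> real"
  by (simp only: measurable_cong_sets[OF Qsets refl])

lemma Q_norm_int: "integrable Q (\<lambda>y. norm y)"
proof -
  interpret Q: prob_space Q by (rule Qprob)
  show ?thesis by (rule Q.square_integrable_imp_integrable) (simp_all add: mQ Q2)
qed

lemma Q_dist_int: "integrable Q (\<lambda>y. norm (x - y))"
proof (rule Bochner_Integration.integrable_bound)
  interpret Q: prob_space Q by (rule Qprob)
  show "integrable Q (\<lambda>y. norm x + norm y)" using Q_norm_int by simp
  show "(\<lambda>y. norm (x - y)) \<in> borel_measurable Q" by (simp add: mQ)
  show "AE y in Q. norm (norm (x - y)) \<le> norm (norm x + norm y)"
    by (simp add: norm_triangle_ineq4)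
qed

abbreviation Yv :: "'b \<Rightarrow> nat \<Rightarrow> 'a" where "Yv \<omega> \<equiv> (\<lambda>i. Y i \<omega>)"

lemma V_int: "integrable M (\<lambda>\<omega>. V m (Yv \<omega>))"
proof (rule Bochner_Integration.integrable_bound)
  show "integrable M (\<lambda>\<omega>. cst m (Yv \<omega>) (\<lambda>i x. p x))"
    unfolding cst_def
    by (intro Bochner_Integration.integrable_divide Bochner_Integration.integrable_sum integrable_mult_right Yint(1) Q_dist_int) auto
  show "(\<lambda>\<omega>. V m (Yv \<omega>)) \<in> borel_measurable M" by (rule V_meas)
  show "AE \<omega> in M. norm (V m (Yv \<omega>)) \<le> norm (cst m (Yv \<omega>) (\<lambda>i x. p x))"
    using V_le[OF m1 Poly_nonempty[OF m1]] V_nonneg by (intro AE_I2) (auto intro: order_trans[OF _ abs_ge_self])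
qed

lemma lower_bound:
  shows "W1 P Q = ennreal (enn2real (W1 P Q))" and "enn2real (W1 P Q) \<le> (\<integral>\<omega>. V m (Yv \<omega>) \<partial>M)"
proof -
  interpret M: prob_space M by (rule Mprob)
  define EV where "EV = (\<integral>\<omega>. V m (Yv \<omega>) \<partial>M)"
  define g where "g = (SOME g :: nat \<Rightarrow> (nat \<Rightarrow> 'a). \<forall>y \<delta>. \<delta> > 0 \<longrightarrow> (\<exists>n. dsum y (g n) < \<delta>))"
  have g0: "\<forall>y \<delta>. \<delta> > 0 \<longrightarrow> (\<exists>n. dsum y (g n) < \<delta>)"
    unfolding g_def by (rule someI_ex[OF grid_exists])
  have g: "\<And>y \<delta>. \<delta> > 0 \<Longrightarrow> \<exists>n. dsum y (g n) < \<delta>" using g0 by blast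
  have main: "W1 P Q \<le> ennreal (EV + 2 * \<epsilon>)" if e: "\<epsilon> > 0" for \<epsilon>
  proof -
    define wsel where "wsel n = (SOME w. w \<in> Poly m \<and> cst m (g n) w < V m (g n) + \<epsilon>)" for n
    have wsel: "wsel n \<in> Poly m \<and> cst m (g n) (wsel n) < V m (g n) + \<epsilon>" for n
    proof -
      have "\<exists>w. w \<in> Poly m \<and> cst m (g n) w < V m (g n) + \<epsilon>"
        using V_approx[OF m1 e, of "g n"] unfolding Bex_def .
      then show ?thesis unfolding wsel_def by (rule someI_ex)
    qed
    define Pn where "Pn n \<omega> = (V m (g n) + dsum (Yv \<omega>) (g n) / m < V m (Yv \<omega>) + \<epsilon>)" for n \<omega>
    define nsel where "nsel \<omega> = (LEAST n. Pn n \<omega>)" for \<omega>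
    have Pex: "\<exists>n. Pn n \<omega>" for \<omega>
    proof -
      have "V m (Yv \<omega>) < V m (Yv \<omega>) + \<epsilon>" using e by simp
      then show ?thesis unfolding Pn_def using V_char[OF g, of "Yv \<omega>" "V m (Yv \<omega>) + \<epsilon>"] by blast
    qed
    have Psel: "Pn (nsel \<omega>) \<omega>" for \<omega> unfolding nsel_def using Pex by (rule LeastI_ex)
    have Pm: "Measurable.pred M (Pn n)" for n
    proof -
      have "(\<lambda>\<omega>. V m (g n) + dsum (Yv \<omega>) (g n) / m) \<in> borel_measurable M"
        using dsum_meas[of "g n"] by (intro borel_measurable_add borel_measurable_divide) auto
      moreover have "(\<lambda>\<omega>. V m (Yv \<omega>) + \<epsilon>) \<in> borel_measurable M"
        using V_meas by (intro borel_measurable_add) auto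
      ultimately show ?thesis unfolding Pn_def by (rule borel_measurable_pred_less)
    qed
    have nsel_m: "nsel \<in> measurable M (count_space UNIV)"
      unfolding nsel_def by (rule measurable_Least) (use Pm in \<open>simp add: Measurable.pred_def\<close>)
    define w where "w \<omega> = wsel (nsel \<omega>)" for \<omega>
    have wm: "(\<lambda>\<omega>. w \<omega> i x) \<in> borel_measurable M" for i x
      unfolding w_def by (rule measurable_compose_countable[OF _ nsel_m]) simp
    have wP: "w \<omega> \<in> Poly m" for \<omega> unfolding w_def using wsel by blast
    have cst_bound: "cst m (Yv \<omega>) (w \<omega>) \<le> V m (Yv \<omega>) + 2 * \<epsilon>" for \<omega>
    proof -
      let ?n = "nsel \<omega>"
      have "cst m (Yv \<omega>) (w \<omega>) \<le> cst m (g ?n) (wsel ?n) + dsum (Yv \<omega>) (g ?n) / m"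
        unfolding w_def dsum_def by (rule cst_lip) (use wsel in blast)
      also have "\<dots> \<le> V m (g ?n) + \<epsilon> + dsum (Yv \<omega>) (g ?n) / m" using wsel[of ?n] by simp
      also have "\<dots> \<le> V m (Yv \<omega>) + 2 * \<epsilon>" using Psel[of \<omega>] unfolding Pn_def by simp
      finally show ?thesis .
    qed
    have nu: "emeasure Q B = (\<Sum>i<m. emeasure M (Y i -` B \<inter> space M)) / of_nat m" if B: "B \<in> sets borel" for B
    proof -
      have "emeasure M (Y i -` B \<inter> space M) = emeasure Q B" if "i < m" for i
        using Y_dist[OF that] Y_rv[OF that] B by (metis emeasure_distr)
      then have "(\<Sum>i<m. emeasure M (Y i -` B \<inter> space M)) = emeasure Q B * of_nat m" by (simp add: mult.commute)
      then show ?thesis using m1 by (simp add: mult_divide_eq_ennreal)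
    qed
    have "W1 P Q \<le> (\<integral>\<^sup>+\<omega>. ennreal (cst m (Yv \<omega>) (w \<omega>)) \<partial>M)"
      by (rule coupling_construct[OF Mprob m1 Y_rv wm wP Qsets nu])
    also have "\<dots> \<le> (\<integral>\<^sup>+\<omega>. ennreal (V m (Yv \<omega>) + 2 * \<epsilon>) \<partial>M)"
      using cst_bound by (intro nn_integral_mono) (simp add: ennreal_leI)
    also have "\<dots> = ennreal (\<integral>\<omega>. V m (Yv \<omega>) + 2 * \<epsilon> \<partial>M)"
      using V_int V_nonneg e by (intro nn_integral_eq_integral) (auto intro!: add_nonneg_nonneg)
    also have "\<dots> = ennreal (EV + 2 * \<epsilon>)"
      using V_int by (simp add: EV_def M.prob_space)
    finally show ?thesis .
  qed
  have fin: "W1 P Q < \<top>" by (rule le_less_trans[OF main[of 1]]) simp_all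
  then show eq: "W1 P Q = ennreal (enn2real (W1 P Q))" by simp
  have EVnn: "0 \<le> EV" unfolding EV_def using V_nonneg by simp
  show "enn2real (W1 P Q) \<le> EV"
  proof (rule field_le_epsilon)
    fix e :: real assume e: "e > 0"
    have "ennreal (enn2real (W1 P Q)) \<le> ennreal (EV + e)" using main[of "e / 2"] e eq by simp
    then show "enn2real (W1 P Q) \<le> EV + e" by (subst (asm) ennreal_le_iff) (use EVnn e in auto)
  qed
qed

end

lemma sqrt_amgm:
  fixes a t :: real assumes "0 \<le> a" "t > 0"
  shows "sqrt a \<le> (a * t + 1 / t) / 2"
proof -
  have "0 \<le> (t * sqrt a - 1)^2" by simp
  also have "(t * sqrt a - 1)^2 = t^2 * a - 2 * t * sqrt a + 1"
    using assms by (simp add: power2_eq_square algebra_simps)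
  finally have "2 * t * sqrt a \<le> t^2 * a + 1" by simp
  then have "sqrt a \<le> (t^2 * a + 1) / (2 * t)" using assms by (simp add: field_simps)
  also have "(t^2 * a + 1) / (2 * t) = (a * t + 1 / t) / 2" using assms by (simp add: field_simps power2_eq_square)
  finally show ?thesis .
qed

lemma sum_sqrt_le:
  fixes p :: "'a \<Rightarrow> real" assumes "finite A" "A \<noteq> {}" "\<And>x. 0 \<le> p x" "(\<Sum>x\<in>A. p x) = 1"
  shows "(\<Sum>x\<in>A. sqrt (p x)) \<le> sqrt (card A)"
proof -
  define t where "t = sqrt (card A)"
  have t: "t > 0" using assms by (simp add: t_def card_gt_0_iff)
  have "(\<Sum>x\<in>A. sqrt (p x)) \<le> (\<Sum>x\<in>A. (p x * t + 1 / t) / 2)"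
    using assms t by (intro sum_mono sqrt_amgm) auto
  also have "\<dots> = ((\<Sum>x\<in>A. p x) * t + card A / t) / 2"
    by (simp add: sum_divide_distrib[symmetric] sum.distrib sum_distrib_right)
  also have "card A / t = t" using t by (simp add: t_def field_simps)
  finally show ?thesis using assms by (simp add: t_def)
qed

context main_setup begin

lemma upper_bound:
  assumes e: "\<epsilon> > 0"
  shows "(\<integral>\<omega>. max (V m (Yv \<omega>) - enn2real (W1 P Q)) 0 \<partial>M)
     \<le> sqrt ((2 * (\<integral>y. (norm y)^2 \<partial>Q) + 2 * (diameter X)^2) / m) + \<epsilon> + diameter X * (sqrt (card X) / sqrt m)"
proof -
  interpret M: prob_space M by (rule Mprob)
  interpret Q: prob_space Q by (rule Qprob)
  define W where "W = enn2real (W1 P Q)"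
  define D where "D = diameter X"
  define s2 where "s2 = (\<integral>y. (norm y)^2 \<partial>Q)"
  have Dnn: "0 \<le> D" unfolding D_def by (simp add: diameter_ge_0 finX finite_imp_bounded)
  have mpos: "real m > 0" using m1 by simp
  have Weq: "W1 P Q = ennreal W" unfolding W_def using lower_bound(1) .
  have "W1 P Q < ennreal (W + \<epsilon>)" unfolding Weq using e by (intro ennreal_lessI add_nonneg_pos) (simp_all add: W_def)
  then obtain \<pi> where pi: "\<pi> \<in> couplings P Q"
    and lt: "(\<integral>\<^sup>+z. ennreal (norm (fst z - snd z)) \<partial>\<pi>) < ennreal (W + \<epsilon>)"
    unfolding W1_def by (auto simp: INF_less_iff)
  obtain k where km: "\<And>x. (\<lambda>z. k z x) \<in> borel_measurable borel"
    and knn: "\<And>z x. 0 \<le> k z x" and ksum: "\<And>z. (\<Sum>x\<in>X. k z x) = 1"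
    and kint: "\<And>x. x\<in>X \<Longrightarrow> (\<integral>\<^sup>+z. ennreal (k z x) \<partial>Q) = ennreal (p x)"
    and kcost: "(\<integral>\<^sup>+z. ennreal (\<Sum>x\<in>X. k z x * norm (x - z)) \<partial>Q) \<le> (\<integral>\<^sup>+z. ennreal (norm (fst z - snd z)) \<partial>\<pi>)"
    using disintegrate[OF Qprob Qsets pi] by blast
  have kle1: "k z x \<le> 1" if "x \<in> X" for z x
    using member_le_sum[of x X "k z", OF that _ finX] knn ksum[of z] by simp
  define f where "f y = (\<Sum>x\<in>X. k y x * norm (x - y))" for y
  have fm: "f \<in> borel_measurable borel" unfolding f_def using km by (intro borel_measurable_sum) auto
  have fnn: "0 \<le> f y" for y unfolding f_def using knn by (auto intro!: sum_nonneg)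
  have fQ: "integrable Q f"
  proof (rule Bochner_Integration.integrable_bound)
    show "integrable Q (\<lambda>y. \<Sum>x\<in>X. norm (x - y))" using Q_dist_int by auto
    show "f \<in> borel_measurable Q" using fm by (simp add: mQ)
    show "AE y in Q. norm (f y) \<le> norm (\<Sum>x\<in>X. norm (x - y))"
    proof (intro AE_I2)
      fix y
      have "f y \<le> (\<Sum>x\<in>X. norm (x - y))" unfolding f_def
        using kle1 knn by (intro sum_mono) (auto intro: mult_left_le_one_le)
      then show "norm (f y) \<le> norm (\<Sum>x\<in>X. norm (x - y))" using fnn[of y] by (simp add: sum_nonneg)
    qed
  qed
  define \<mu> where "\<mu> = (\<integral>y. f y \<partial>Q)"
  have mu_le: "\<mu> \<le> W + \<epsilon>"
  proof -
    have "ennreal \<mu> = (\<integral>\<^sup>+y. ennreal (f y) \<partial>Q)" unfolding \<mu>_def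
      using fQ fnn by (subst nn_integral_eq_integral) auto
    also have "\<dots> < ennreal (W + \<epsilon>)" using kcost lt unfolding f_def by simp
    finally show ?thesis using fnn by (subst (asm) ennreal_less_iff) (auto simp: \<mu>_def W_def)
  qed
  define q where "q \<omega> x = (\<Sum>i<m. k (Y i \<omega>) x) / m" for \<omega> x
  define A where "A \<omega> = (\<Sum>i<m. f (Y i \<omega>)) / m" for \<omega>
  have pw: "V m (Yv \<omega>) \<le> A \<omega> + D * (\<Sum>x\<in>X. \<bar>q \<omega> x - p x\<bar>)" for \<omega>
  proof -
    obtain w where w: "w \<in> Poly m" and c: "cst m (Yv \<omega>) w \<le> (\<Sum>i<m. \<Sum>x\<in>X. k (Y i \<omega>) x * norm (x - Y i \<omega>)) / m
            + diameter X * (\<Sum>x\<in>X. \<bar>(\<Sum>i<m. k (Y i \<omega>) x) / m - p x\<bar>)"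
      using correction[OF m1, of "\<lambda>i x. k (Y i \<omega>) x" "Yv \<omega>"] knn ksum by blast
    have "V m (Yv \<omega>) \<le> cst m (Yv \<omega>) w" by (rule V_le[OF m1 w])
    also note c
    finally show ?thesis unfolding A_def f_def q_def D_def .
  qed
  obtain x0 where x0: "x0 \<in> X" using neX by blast
  define f' where "f' y = f y - norm x0" for y
  have f'_bound: "\<bar>f' y\<bar> \<le> norm y + D" for y
  proof -
    have up: "f y \<le> norm x0 + norm y + D"
    proof -
      have "f y \<le> (\<Sum>x\<in>X. k y x * (norm x0 + norm y + D))" unfolding f_def
      proof (intro sum_mono mult_left_mono)
        fix x assume x: "x \<in> X"
        have "norm (x - y) \<le> norm (x0 - y) + D" using diam_le[OF x x0] by (simp add: D_def)
        also have "norm (x0 - y) \<le> norm x0 + norm y" by (rule norm_triangle_ineq4)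
        finally show "norm (x - y) \<le> norm x0 + norm y + D" by simp
      qed (use knn in auto)
      also have "\<dots> = norm x0 + norm y + D" by (simp add: sum_distrib_right[symmetric] ksum)
      finally show ?thesis .
    qed
    have lo: "norm x0 - norm y - D \<le> f y"
    proof -
      have "(\<Sum>x\<in>X. k y x * (norm x0 - norm y - D)) \<le> f y" unfolding f_def
      proof (intro sum_mono mult_left_mono)
        fix x assume x: "x \<in> X"
        have "norm (x0 - y) \<le> norm (x - y) + D" using diam_le[OF x0 x] by (simp add: D_def)
        moreover have "norm x0 - norm y \<le> norm (x0 - y)" by (rule norm_triangle_ineq2)
        ultimately show "norm x0 - norm y - D \<le> norm (x - y)" by simp
      qed (use knn in auto)
      moreover have "(\<Sum>x\<in>X. k y x * (norm x0 - norm y - D)) = norm x0 - norm y - D"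
        by (simp add: sum_distrib_right[symmetric] ksum)
      ultimately show ?thesis by simp
    qed
    show ?thesis unfolding f'_def using up lo by linarith
  qed
  have f'm: "f' \<in> borel_measurable borel" unfolding f'_def using fm by simp
  have f'2: "integrable Q (\<lambda>y. (f' y)^2)"
  proof (rule Bochner_Integration.integrable_bound)
    show "integrable Q (\<lambda>y. 2 * (norm y)^2 + 2 * D^2)" using Q2 by simp
    show "(\<lambda>y. (f' y)^2) \<in> borel_measurable Q" using f'm by (simp add: mQ)
    show "AE y in Q. norm ((f' y)^2) \<le> norm (2 * (norm y)^2 + 2 * D^2)"
    proof (intro AE_I2)
      fix y
      have "(f' y)^2 \<le> (norm y + D)^2" using f'_bound[of y] Dnn
        by (metis abs_ge_zero add_nonneg_nonneg norm_ge_zero power2_abs power_mono)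
      also have "\<dots> \<le> 2 * (norm y)^2 + 2 * D^2"
        using sum_squares_ge_zero[of "norm y - D" 0] by (simp add: power2_eq_square algebra_simps)
      finally show "norm ((f' y)^2) \<le> norm (2 * (norm y)^2 + 2 * D^2)" by simp
    qed
  qed
  have If'2: "(\<integral>y. (f' y)^2 \<partial>Q) \<le> 2 * s2 + 2 * D^2"
  proof -
    have "(\<integral>y. (f' y)^2 \<partial>Q) \<le> (\<integral>y. 2 * (norm y)^2 + 2 * D^2 \<partial>Q)"
    proof (rule integral_mono[OF f'2])
      show "integrable Q (\<lambda>y. 2 * (norm y)^2 + 2 * D^2)" using Q2 by simp
      fix y
      have "(f' y)^2 \<le> (norm y + D)^2" using f'_bound[of y] Dnn
        by (metis abs_ge_zero add_nonneg_nonneg norm_ge_zero power2_abs power_mono)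
      also have "\<dots> \<le> 2 * (norm y)^2 + 2 * D^2"
        using sum_squares_ge_zero[of "norm y - D" 0] by (simp add: power2_eq_square algebra_simps)
      finally show "(f' y)^2 \<le> 2 * (norm y)^2 + 2 * D^2" .
    qed
    also have "\<dots> = 2 * s2 + 2 * D^2" using Q2 by (simp add: s2_def Q.prob_space)
    finally show ?thesis .
  qed
  have Af': "(\<Sum>i<m. f' (Y i \<omega>)) / m - (\<integral>y. f' y \<partial>Q) = A \<omega> - \<mu>" for \<omega>
  proof -
    have "(\<integral>y. f' y \<partial>Q) = \<mu> - norm x0" unfolding f'_def \<mu>_def using fQ by (simp add: Q.prob_space)
    moreover have "(\<Sum>i<m. f' (Y i \<omega>)) / m = A \<omega> - norm x0"
      unfolding f'_def A_def using mpos by (simp add: sum_subtractf field_simps)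
    ultimately show ?thesis by simp
  qed
  note vb1 = var_bound[OF Mprob m1 Y_rv Y_dist Y_indep f'm f'2]
  have EA_int: "integrable M (\<lambda>\<omega>. \<bar>A \<omega> - \<mu>\<bar>)" using vb1(1) unfolding Af' .
  have EA: "(\<integral>\<omega>. \<bar>A \<omega> - \<mu>\<bar> \<partial>M) \<le> sqrt ((2 * s2 + 2 * D^2) / m)"
  proof -
    have "(\<integral>\<omega>. \<bar>A \<omega> - \<mu>\<bar> \<partial>M) \<le> sqrt ((\<integral>y. (f' y)^2 \<partial>Q) / m)" using vb1(2) unfolding Af' .
    also have "\<dots> \<le> sqrt ((2 * s2 + 2 * D^2) / m)" using If'2 mpos by (simp add: divide_right_mono)
    finally show ?thesis .
  qed
  have kQ: "integrable Q (\<lambda>z. k z x) \<and> (\<integral>z. k z x \<partial>Q) = p x" if x: "x \<in> X" for x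
  proof
    show kint': "integrable Q (\<lambda>z. k z x)"
      using kle1[OF x] knn km[of x] by (intro Q.integrable_const_bound[where B=1]) (auto simp: mQ)
    have "ennreal (\<integral>z. k z x \<partial>Q) = (\<integral>\<^sup>+z. ennreal (k z x) \<partial>Q)"
      using kint' knn by (subst nn_integral_eq_integral) auto
    also have "\<dots> = ennreal (p x)" by (rule kint[OF x])
    finally show "(\<integral>z. k z x \<partial>Q) = p x" using p_nonneg knn by (subst (asm) ennreal_inj) (auto intro: integral_nonneg_AE)
  qed
  have Eq: "integrable M (\<lambda>\<omega>. \<bar>q \<omega> x - p x\<bar>) \<and> (\<integral>\<omega>. \<bar>q \<omega> x - p x\<bar> \<partial>M) \<le> sqrt (p x / m)" if x: "x \<in> X" for x
  proof -
    have k2: "integrable Q (\<lambda>z. (k z x)^2)"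
      using kle1[OF x] knn km[of x] by (intro Q.integrable_const_bound[where B=1]) (auto simp: mQ abs_square_le_1)
    note vb = var_bound[OF Mprob m1 Y_rv Y_dist Y_indep km k2]
    have "(\<integral>z. (k z x)^2 \<partial>Q) \<le> (\<integral>z. k z x \<partial>Q)"
      using k2 kQ[OF x] kle1[OF x] knn by (intro integral_mono) (auto simp: power2_eq_square mult_left_le_one_le)
    then have "(\<integral>z. (k z x)^2 \<partial>Q) \<le> p x" using kQ[OF x] by simp
    then have s: "sqrt ((\<integral>z. (k z x)^2 \<partial>Q) / m) \<le> sqrt (p x / m)" using mpos by (simp add: divide_right_mono)
    have i1: "integrable M (\<lambda>\<omega>. \<bar>q \<omega> x - p x\<bar>)" using vb(1) kQ[OF x] unfolding q_def by simp
    have "(\<integral>\<omega>. \<bar>q \<omega> x - p x\<bar> \<partial>M) \<le> sqrt ((\<integral>z. (k z x)^2 \<partial>Q) / m)"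
      using vb(2) kQ[OF x] unfolding q_def by simp
    then show ?thesis using i1 s by linarith
  qed
  have sumsq: "(\<Sum>x\<in>X. sqrt (p x / m)) \<le> sqrt (card X) / sqrt m"
  proof -
    have "(\<Sum>x\<in>X. sqrt (p x / m)) = (\<Sum>x\<in>X. sqrt (p x)) / sqrt m"
      by (simp add: real_sqrt_divide sum_divide_distrib)
    also have "\<dots> \<le> sqrt (card X) / sqrt m"
      using sum_sqrt_le[OF finX neX p_nonneg sum_p] mpos by (simp add: divide_right_mono)
    finally show ?thesis .
  qed
  define B where "B \<omega> = \<bar>A \<omega> - \<mu>\<bar> + \<epsilon> + D * (\<Sum>x\<in>X. \<bar>q \<omega> x - p x\<bar>)" for \<omega>
  have B_int: "integrable M B" unfolding B_def using EA_int Eq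
    by (intro Bochner_Integration.integrable_add Bochner_Integration.integrable_sum integrable_mult_right) auto
  have maxm: "(\<lambda>\<omega>. max (V m (Yv \<omega>) - W) 0) \<in> borel_measurable M" using V_meas by measurable
  have "(\<integral>\<omega>. max (V m (Yv \<omega>) - W) 0 \<partial>M) \<le> (\<integral>\<omega>. B \<omega> \<partial>M)"
  proof (rule integral_mono_AE')
    show "integrable M B" by (rule B_int)
    show "AE \<omega> in M. max (V m (Yv \<omega>) - W) 0 \<le> B \<omega>"
    proof (intro AE_I2)
      fix \<omega>
      have "V m (Yv \<omega>) - W \<le> B \<omega>" using pw[of \<omega>] mu_le unfolding B_def by linarith
      moreover have "0 \<le> B \<omega>" unfolding B_def using e Dnn by (auto intro!: add_nonneg_nonneg mult_nonneg_nonneg sum_nonneg)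
      ultimately show "max (V m (Yv \<omega>) - W) 0 \<le> B \<omega>" by simp
    qed
    show "AE \<omega> in M. 0 \<le> B \<omega>" unfolding B_def using e Dnn by (auto intro!: add_nonneg_nonneg mult_nonneg_nonneg sum_nonneg)
  qed
  also have "(\<integral>\<omega>. B \<omega> \<partial>M) = (\<integral>\<omega>. \<bar>A \<omega> - \<mu>\<bar> \<partial>M) + \<epsilon> + D * (\<Sum>x\<in>X. \<integral>\<omega>. \<bar>q \<omega> x - p x\<bar> \<partial>M)"
    unfolding B_def using EA_int Eq
    by (subst Bochner_Integration.integral_add, (auto intro!: Bochner_Integration.integrable_sum)[2],
        subst Bochner_Integration.integral_add, auto simp: M.prob_space Bochner_Integration.integral_sum)
  also have "\<dots> \<le> sqrt ((2 * s2 + 2 * D^2) / m) + \<epsilon> + D * (\<Sum>x\<in>X. sqrt (p x / m))"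
    using EA Eq Dnn by (intro add_mono mult_left_mono sum_mono) auto
  also have "\<dots> \<le> sqrt ((2 * s2 + 2 * D^2) / m) + \<epsilon> + D * (sqrt (card X) / sqrt m)"
    using sumsq Dnn by (intro add_mono mult_left_mono) auto
  finally show ?thesis unfolding W_def s2_def D_def .
qed

end

context main_setup begin

lemma final_bound:
  shows "integrable M (\<lambda>\<omega>. \<bar>V m (Yv \<omega>) - enn2real (W1 P Q)\<bar>)"
    and "(\<integral>\<omega>. \<bar>V m (Yv \<omega>) - enn2real (W1 P Q)\<bar> \<partial>M)
       \<le> 2 * sqrt ((2 * (\<integral>y. (norm y)^2 \<partial>Q) + 2 * (diameter X)^2) / m) + 2 * (diameter X * (sqrt (card X) / sqrt m))"
proof -
  interpret M: prob_space M by (rule Mprob)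
  define W where "W = enn2real (W1 P Q)"
  define bnd where "bnd = sqrt ((2 * (\<integral>y. (norm y)^2 \<partial>Q) + 2 * (diameter X)^2) / m) + diameter X * (sqrt (card X) / sqrt m)"
  have Zi: "integrable M (\<lambda>\<omega>. V m (Yv \<omega>) - W)" using V_int by simp
  show "integrable M (\<lambda>\<omega>. \<bar>V m (Yv \<omega>) - enn2real (W1 P Q)\<bar>)" using Zi unfolding W_def by simp
  have Mi: "integrable M (\<lambda>\<omega>. max (V m (Yv \<omega>) - W) 0)"
    using Zi by (intro Bochner_Integration.integrable_max) auto
  have eq: "(\<integral>\<omega>. \<bar>V m (Yv \<omega>) - W\<bar> \<partial>M) = 2 * (\<integral>\<omega>. max (V m (Yv \<omega>) - W) 0 \<partial>M) - (\<integral>\<omega>. V m (Yv \<omega>) - W \<partial>M)"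
  proof -
    have "(\<integral>\<omega>. \<bar>V m (Yv \<omega>) - W\<bar> \<partial>M) = (\<integral>\<omega>. 2 * max (V m (Yv \<omega>) - W) 0 - (V m (Yv \<omega>) - W) \<partial>M)"
      by (intro Bochner_Integration.integral_cong refl) (simp add: abs_if max_def)
    also have "\<dots> = 2 * (\<integral>\<omega>. max (V m (Yv \<omega>) - W) 0 \<partial>M) - (\<integral>\<omega>. V m (Yv \<omega>) - W \<partial>M)"
      using Mi Zi by simp
    finally show ?thesis .
  qed
  have EZ: "0 \<le> (\<integral>\<omega>. V m (Yv \<omega>) - W \<partial>M)"
    using lower_bound(2) V_int by (simp add: W_def M.prob_space)
  have "(\<integral>\<omega>. \<bar>V m (Yv \<omega>) - W\<bar> \<partial>M) \<le> 2 * bnd"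
  proof (rule field_le_epsilon)
    fix e :: real assume e: "e > 0"
    have "(\<integral>\<omega>. max (V m (Yv \<omega>) - W) 0 \<partial>M) \<le> bnd + e / 2"
      using upper_bound[of "e / 2"] e unfolding bnd_def W_def by simp
    then show "(\<integral>\<omega>. \<bar>V m (Yv \<omega>) - W\<bar> \<partial>M) \<le> 2 * bnd + e" using eq EZ by simp
  qed
  then show "(\<integral>\<omega>. \<bar>V m (Yv \<omega>) - enn2real (W1 P Q)\<bar> \<partial>M)
       \<le> 2 * sqrt ((2 * (\<integral>y. (norm y)^2 \<partial>Q) + 2 * (diameter X)^2) / m) + 2 * (diameter X * (sqrt (card X) / sqrt m))"
    unfolding W_def bnd_def by (simp add: distrib_left)
qed

end

lemma numeric:
  fixes s2 D N m :: real
  assumes s2: "0 \<le> s2" and D: "0 \<le> D" and N: "N \<ge> 1" and m: "m \<ge> 1"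
  shows "2 * sqrt ((2 * s2 + 2 * D^2) / m) + 2 * (D * (sqrt N / sqrt m))
    \<le> 8 * sqrt (2 * N) / sqrt m * ((4 * D + 2 * sqrt s2 + 2 * D) * (ln 2 + sqrt (2 * D + 1)))"
proof -
  define r where "r = sqrt s2"
  have r: "0 \<le> r" "r^2 = s2" using s2 by (auto simp: r_def)
  have sm: "sqrt m > 0" using m by simp
  have sN: "sqrt N \<ge> 1" using N by simp
  have "0 \<le> sqrt N" using N by simp
  have a: "sqrt (2 * s2 + 2 * D^2) \<le> 2 * r + 2 * D"
  proof (rule real_le_lsqrt)
    show "0 \<le> 2 * r + 2 * D" using r D by simp
    have "0 \<le> 8 * r * D" using r D by simp
    have ex: "(2 * r + 2 * D)^2 = 4 * s2 + 8 * r * D + 4 * D^2" using r(2) by (simp add: power2_eq_square algebra_simps)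
    have "0 \<le> D^2" by simp
    then show "2 * s2 + 2 * D^2 \<le> (2 * r + 2 * D)^2" unfolding ex using s2 \<open>0 \<le> 8 * r * D\<close>
      by linarith
  qed
  have L1: "ln 2 + sqrt (2 * D + 1) \<ge> 1"
  proof -
    have "ln (2::real) \<ge> 0" by simp
    moreover have "sqrt (2 * D + 1) \<ge> 1" using D by simp
    ultimately show ?thesis by linarith
  qed
  have s2N: "sqrt (2 * N) \<ge> sqrt N" using N by simp
  have "2 * sqrt ((2 * s2 + 2 * D^2) / m) + 2 * (D * (sqrt N / sqrt m))
      = (2 * sqrt (2 * s2 + 2 * D^2) + 2 * D * sqrt N) / sqrt m"
    by (subst real_sqrt_divide) (simp add: add_divide_distrib)
  also have "\<dots> \<le> (2 * (2 * r + 2 * D) + 2 * D * sqrt N) / sqrt m"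
    using a sm by (intro divide_right_mono) auto
  also have "\<dots> \<le> (8 * sqrt N * (6 * D + 2 * r)) / sqrt m"
  proof (intro divide_right_mono)
    have h1: "r * 1 \<le> r * sqrt N" by (rule mult_left_mono[OF sN r(1)])
    have h2: "D * 1 \<le> D * sqrt N" by (rule mult_left_mono[OF sN D])
    have e1: "8 * sqrt N * (6 * D + 2 * r) = 48 * (D * sqrt N) + 16 * (r * sqrt N)" by (simp add: algebra_simps)
    have e2: "2 * (2 * r + 2 * D) + 2 * D * sqrt N = 4 * r + 4 * D + 2 * (D * sqrt N)" by (simp add: algebra_simps)
    show "2 * (2 * r + 2 * D) + 2 * D * sqrt N \<le> 8 * sqrt N * (6 * D + 2 * r)"
      unfolding e1 e2 using h1 h2 r(1) D by linarith
  qed (use sm in auto)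
  also have "\<dots> \<le> (8 * sqrt (2 * N) * ((6 * D + 2 * r) * (ln 2 + sqrt (2 * D + 1)))) / sqrt m"
  proof (intro divide_right_mono)
    have "0 \<le> 6 * D + 2 * r" using D r by simp
    then have "6 * D + 2 * r \<le> (6 * D + 2 * r) * (ln 2 + sqrt (2 * D + 1))"
      using L1 by (simp add: mult_le_cancel_left1)
    moreover have "0 \<le> sqrt N" using N by simp
    ultimately show "8 * sqrt N * (6 * D + 2 * r) \<le> 8 * sqrt (2 * N) * ((6 * D + 2 * r) * (ln 2 + sqrt (2 * D + 1)))"
      using s2N \<open>0 \<le> 6 * D + 2 * r\<close> by (intro mult_mono mult_left_mono) auto
  qed (use sm in auto)
  also have "\<dots> = 8 * sqrt (2 * N) / sqrt m * ((4 * D + 2 * sqrt s2 + 2 * D) * (ln 2 + sqrt (2 * D + 1)))"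
    by (simp add: r_def algebra_simps add_divide_distrib)
  finally show ?thesis .
qed


theorem theorem2:
  fixes X :: "'a::euclidean_space set" and N m :: nat
    and P Q :: "'a measure" and M :: "'b measure" and Y :: "nat \<Rightarrow> 'b \<Rightarrow> 'a"
  assumes X: "finite X" "card X = N" "N \<ge> 1"
    and P: "prob_space P" "sets P = sets borel" "emeasure P X = 1"
    and Q: "prob_space Q" "sets Q = sets borel" "integrable Q (\<lambda>y. (norm y)\<^sup>2)"
    and M: "prob_space M"
    and m: "m \<ge> 1"
    and Y_rv: "\<And>i. i < m \<Longrightarrow> Y i \<in> borel_measurable M"
    and Y_dist: "\<And>i. i < m \<Longrightarrow> distr M borel (Y i) = Q"
    and Y_indep: "prob_space.indep_vars M (\<lambda>_. borel) Y {..<m}"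
  shows "integrable M (\<lambda>\<omega>. \<bar>enn2real (W1 P (empirical_measure m Y \<omega>)) - enn2real (W1 P Q)\<bar>)
    \<and> (\<integral>\<omega>. \<bar>enn2real (W1 P (empirical_measure m Y \<omega>)) - enn2real (W1 P Q)\<bar> \<partial>M)
        \<le> 8 * sqrt (2 * real N) / sqrt (real m) *
          ((4 * diameter X + 2 * sqrt (\<integral>y. (norm y)\<^sup>2 \<partial>Q) + 2 * diameter X)
           * (ln 2 + sqrt (2 * diameter X + 1)))"
proof -
  have neX: "X \<noteq> {}" using X by auto
  interpret main_setup X P Q M Y m
    unfolding main_setup_def main_setup_axioms_def fin_setup_def
    using X P Q M m Y_rv Y_dist Y_indep neX by blast
  have emp: "enn2real (W1 P (empirical_measure m Y \<omega>)) = V m (\<lambda>i. Y i \<omega>)" for \<omega>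
    by (simp add: empirical_measure_def V_def Qm_def)
  have s2: "0 \<le> (\<integral>y. (norm y)^2 \<partial>Q)" by simp
  have D: "0 \<le> diameter X" using X by (simp add: diameter_ge_0 finite_imp_bounded)
  have N: "real N \<ge> 1" using X by simp
  have mm: "real m \<ge> 1" using m by simp
  have cX: "real (card X) = real N" using X by simp
  show ?thesis
    unfolding emp
    using final_bound(1) order_trans[OF final_bound(2)[unfolded cX] numeric[OF s2 D N mm]] by simp
qed

end
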